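(* Every regular hyperbolic odd-gon in $\mathbb{H}^2$ is reduced.
   Context: A hyperbolic regular $k$-gon ($k\ge 3$) is the convex hull of $k$ points $v_1,\dots,v_k$ on a hyperbolic circle in $\mathbb{H}^2$ with $|v_1v_2|=\dots=|v_{k-1}v_k|=|v_kv_1|$. A convex body in $\mathbb{H}^2$ is a compact convex set with nonempty interior. For a line $H$ supporting a convex body $C$, $\mathrm{width}_H(C)$ is the distance between $H$ and a farthest line ultraparallel to $H$ supporting $C$; the thickness $\Delta(C)$ is the minimum of $\mathrm{width}_H(C)$ over supporting lines $H$. A convex body $R$ is reduced if $\Delta(Z)<\Delta(R)$ for every convex body $Z$ properly contained in $R$. *)

theory Defs
  imports "HOL-Analysis.Analysis"
begin

text \<open>The hyperbolic plane is modelled by the Beltrami--Klein model: the open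
unit disk in the complex plane (viewed as the Euclidean plane).  Hyperbolic
lines are the (open) chords of the disk, hence hyperbolic convexity is
Euclidean convexity inside the disk.\<close>

definition hdisk :: "complex set" where
  "hdisk = {x. norm x < 1}"

definition hdist :: "complex \<Rightarrow> complex \<Rightarrow> real" where
  "hdist x y = arcosh ((1 - x \<bullet> y) / sqrt ((1 - (norm x)\<^sup>2) * (1 - (norm y)\<^sup>2)))"

text \<open>The hyperbolic line cut out by the Euclidean line x.a = b
  (which meets the open disk iff a \<noteq> 0 and |b| < |a|).\<close>
definition hline :: "complex \<Rightarrow> real \<Rightarrow> complex set" where
  "hline a b = {x. norm x < 1 \<and> x \<bullet> a = b}"

definition valid_line :: "complex \<Rightarrow> real \<Rightarrow> bool" where
  "valid_line a b \<longleftrightarrow> a \<noteq> 0 \<and> \<bar>b\<bar> < norm a"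

definition is_hline :: "complex set \<Rightarrow> bool" where
  "is_hline L \<longleftrightarrow> (\<exists>a b. valid_line a b \<and> L = hline a b)"

text \<open>Ultraparallel lines: their closures in the closed disk are disjoint
  (they neither meet nor share an ideal endpoint).\<close>
definition ultraparallel :: "complex set \<Rightarrow> complex set \<Rightarrow> bool" where
  "ultraparallel L L' \<longleftrightarrow>
     (\<exists>a b a' b'. valid_line a b \<and> valid_line a' b' \<and> L = hline a b \<and> L' = hline a' b' \<and>
        \<not> (\<exists>x. norm x \<le> 1 \<and> x \<bullet> a = b \<and> x \<bullet> a' = b'))"

definition supports :: "complex set \<Rightarrow> complex set \<Rightarrow> bool" where
  "supports L C \<longleftrightarrow>
     (\<exists>a b. valid_line a b \<and> L = hline a b \<and> C \<subseteq> {x. x \<bullet> a \<le> b} \<and> L \<inter> C \<noteq> {})"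

definition hsetdist :: "complex set \<Rightarrow> complex set \<Rightarrow> real" where
  "hsetdist A B = Inf {hdist x y | x y. x \<in> A \<and> y \<in> B}"

definition convex_body :: "complex set \<Rightarrow> bool" where
  "convex_body C \<longleftrightarrow> C \<subseteq> hdisk \<and> compact C \<and> convex C \<and> interior C \<noteq> {}"

definition hwidth :: "complex set \<Rightarrow> complex set \<Rightarrow> real" where
  "hwidth H C = Sup {hsetdist H H' | H'. supports H' C \<and> ultraparallel H H'}"

definition thickness :: "complex set \<Rightarrow> real" where
  "thickness C = Inf {hwidth H C | H. supports H C}"

definition reduced :: "complex set \<Rightarrow> bool" where
  "reduced R \<longleftrightarrow> convex_body R \<and>
     (\<forall>Z. convex_body Z \<and> Z \<subset> R \<longrightarrow> thickness Z < thickness R)"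

definition hcircle :: "complex \<Rightarrow> real \<Rightarrow> complex set" where
  "hcircle c r = {x \<in> hdisk. hdist c x = r}"

definition regular_polygon :: "nat \<Rightarrow> complex set \<Rightarrow> bool" where
  "regular_polygon k P \<longleftrightarrow> k \<ge> 3 \<and>
     (\<exists>c r v. c \<in> hdisk \<and> r > 0 \<and> (\<forall>i<k. v i \<in> hcircle c r) \<and> inj_on v {..<k} \<and>
        (\<forall>i<k. hdist (v i) (v (Suc i mod k)) = hdist (v 0) (v 1)) \<and>
        P = convex hull (v ` {..<k}))"

end

theory Submission
  imports Defs
begin


definition mink :: "complex \<times> real \<Rightarrow> complex \<times> real \<Rightarrow> real" where
  "mink X Y = fst X \<bullet> fst Y - snd X * snd Y"

lemma mink_comm: "mink X Y = mink Y X"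
  by (simp add: mink_def inner_commute mult.commute)
lemma mink_add_right: "mink X (Y + Z) = mink X Y + mink X Z"
  by (simp add: mink_def inner_add_right algebra_simps)
lemma mink_add_left: "mink (Y + Z) X = mink Y X + mink Z X"
  by (simp add: mink_def inner_add_left algebra_simps)
lemma mink_diff_right: "mink X (Y - Z) = mink X Y - mink X Z"
  by (simp add: mink_def inner_diff_right algebra_simps)
lemma mink_diff_left: "mink (Y - Z) X = mink Y X - mink Z X"
  by (simp add: mink_def inner_diff_left algebra_simps)
lemma mink_scale_right: "mink X (r *\<^sub>R Y) = r * mink X Y"
  by (simp add: mink_def algebra_simps)
lemma mink_scale_left: "mink (r *\<^sub>R Y) X = r * mink Y X"
  by (simp add: mink_def algebra_simps)
lemma mink_pair: "mink (x, t) (y, s) = x \<bullet> y - t * s"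
  by (simp add: mink_def)

lemmas mink_simps = mink_add_right mink_add_left mink_diff_right mink_diff_left
  mink_scale_right mink_scale_left

lemma mink_rcs:
  assumes "mink X X < 0"
  shows "mink X X * mink Y Y \<le> (mink X Y)^2"
proof -
  obtain x t where X: "X = (x,t)" by fastforce
  obtain y s where Y: "Y = (y,s)" by fastforce
  have t0: "t \<noteq> 0"
  proof
    assume "t = 0"
    then have "mink X X = x \<bullet> x" by (simp add: X mink_def)
    with assms inner_ge_zero[of x] show False by simp
  qed
  define l where "l = - s / t"
  have "snd (Y + l *\<^sub>R X) = 0" using t0 by (simp add: X Y l_def)
  then have "mink (Y + l *\<^sub>R X) (Y + l *\<^sub>R X) \<ge> 0"
    by (simp add: mink_def)
  moreover have "mink (Y + l *\<^sub>R X) (Y + l *\<^sub>R X) = mink Y Y + 2 * l * mink X Y + l^2 * mink X X"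
    by (simp add: mink_simps mink_comm[of Y X] power2_eq_square algebra_simps)
  ultimately have h: "mink Y Y + 2 * l * mink X Y + l^2 * mink X X \<ge> 0" by simp
  have "mink X X * (mink Y Y + 2 * l * mink X Y + l^2 * mink X X) \<le> 0"
    using assms h by (simp add: mult_nonneg_nonpos2 mult_le_0_iff)
  then have "mink X X * mink Y Y \<le> - (2 * l * mink X X * mink X Y + l^2 * (mink X X)^2)"
    by (simp add: algebra_simps power2_eq_square)
  also have "\<dots> \<le> (mink X Y)^2"
    using zero_le_power2 [of "mink X X * l + mink X Y"] by (simp add: power2_eq_square algebra_simps)
  finally show ?thesis .
qed

definition Ach :: "complex \<Rightarrow> complex \<Rightarrow> real" where
  "Ach x y = (1 - x \<bullet> y) / sqrt ((1 - (norm x)\<^sup>2) * (1 - (norm y)\<^sup>2))"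

lemma hdist_Ach: "hdist x y = arcosh (Ach x y)"
  by (simp add: hdist_def Ach_def)

lemma inner_lt1: fixes x y :: complex shows "norm x < 1 \<Longrightarrow> norm y \<le> 1 \<Longrightarrow> x \<bullet> y < (1::real)"
proof -
  assume a: "norm x < 1" "norm y \<le> 1"
  have "x \<bullet> y \<le> norm x * norm y" by (rule norm_cauchy_schwarz)
  also have "\<dots> < 1"
  proof (cases "norm y = 0")
    case True then show ?thesis by simp
  next
    case False
    then have "norm x * norm y < 1 * norm y" using a by (intro mult_strict_right_mono) auto
    then show ?thesis using a by simp
  qed
  finally show ?thesis .
qed

lemma q_pos: "norm x < 1 \<Longrightarrow> 0 < 1 - (norm x)\<^sup>2"
  by (simp add: abs_square_less_1)

lemma mink_pt_self: "mink ((x::complex),1) (x,1) = (norm x)^2 - 1"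
  by (simp add: mink_def power2_norm_eq_inner)

lemma rcs_pt:
  fixes x y :: complex
 
  assumes "norm x < 1" "norm y < 1"
  shows "(1 - (norm x)\<^sup>2) * (1 - (norm y)\<^sup>2) \<le> (1 - x \<bullet> y)^2"
proof -
  have "mink (x,1) (x,1) < 0" using assms by (simp add: mink_pt_self abs_square_less_1)
  from mink_rcs[OF this, of "(y,1)"]
  have "((norm x)^2 - 1) * ((norm y)^2 - 1) \<le> (x \<bullet> y - 1)^2"
    by (simp only: mink_pt_self mink_pair) (simp add: power2_norm_eq_inner)
  moreover have "((norm x)^2 - 1) * ((norm y)^2 - 1) = (1 - (norm x)\<^sup>2) * (1 - (norm y)\<^sup>2)"
    by (simp add: algebra_simps)
  moreover have "(x \<bullet> y - 1)^2 = (1 - x \<bullet> y)^2" by (simp add: power2_commute)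
  ultimately show ?thesis by simp
qed

lemma sqrt_le_of_sq: "(0::real) \<le> z \<Longrightarrow> p \<le> z^2 \<Longrightarrow> sqrt p \<le> z"
  by (metis real_sqrt_le_mono real_sqrt_pow2_iff real_sqrt_power real_sqrt_unique)

lemma Ach_ge1:
  fixes x y :: complex
 
  assumes "norm x < 1" "norm y < 1"
  shows "1 \<le> Ach x y"
proof -
  have p: "0 < (1 - (norm x)\<^sup>2) * (1 - (norm y)\<^sup>2)" using q_pos[OF assms(1)] q_pos[OF assms(2)] by simp
  have z: "0 < 1 - x \<bullet> y" using inner_lt1[of x y] assms by simp
  have "sqrt ((1 - (norm x)\<^sup>2) * (1 - (norm y)\<^sup>2)) \<le> 1 - x \<bullet> y"
    using sqrt_le_of_sq[OF _ rcs_pt[OF assms]] z by simp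
  then show ?thesis using p by (simp add: Ach_def)
qed

lemma Ach_pos: fixes x y :: complex shows "norm x < 1 \<Longrightarrow> norm y < 1 \<Longrightarrow> 0 < Ach x y"
  using Ach_ge1[of x y] by simp

lemma Ach_self: fixes x y :: complex shows "norm x < 1 \<Longrightarrow> Ach x x = 1"
proof -
  assume a: "norm x < 1"
  have "x \<bullet> x = (norm x)^2" by (simp add: power2_norm_eq_inner)
  moreover have "sqrt ((1 - (norm x)\<^sup>2) * (1 - (norm x)\<^sup>2)) = 1 - (norm x)^2"
    using q_pos[OF a] by simp
  ultimately show ?thesis using q_pos[OF a] by (simp add: Ach_def)
qed

lemma one_minus_inner_eq: 
  assumes "norm x < 1" "norm y < 1"
  shows "1 - x \<bullet> y = Ach x y * sqrt (1 - (norm x)\<^sup>2) * sqrt (1 - (norm y)\<^sup>2)"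
proof -
  have p1: "0 < sqrt (1 - (norm x)\<^sup>2)" using q_pos[OF assms(1)] by simp
  have p2: "0 < sqrt (1 - (norm y)\<^sup>2)" using q_pos[OF assms(2)] by simp
  show ?thesis using p1 p2 by (simp add: Ach_def real_sqrt_mult)
qed

lemma Ach_sq:
  fixes x y :: complex
 
  assumes "norm x < 1" "norm y < 1"
  shows "(Ach x y)^2 = (1 - x \<bullet> y)^2 / ((1 - (norm x)\<^sup>2) * (1 - (norm y)\<^sup>2))"
proof -
  have p: "0 < (1 - (norm x)\<^sup>2) * (1 - (norm y)\<^sup>2)" using q_pos[OF assms(1)] q_pos[OF assms(2)] by simp
  show ?thesis unfolding Ach_def using p by (simp add: power_divide)
qed

lemma aux_frac1: "(a::real) > 0 \<Longrightarrow> b > 0 \<Longrightarrow> n > 0 \<Longrightarrow> 1 + m^2/(b*n) = (a*(b + m^2/n))/(a*b)"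
  by (simp add: field_simps)

lemma dist_line_lower:
  fixes x y :: complex
 
  assumes x: "norm x < 1" and y: "norm y < 1" and xN: "mink (x,1) N = 0" and N: "mink N N > 0"
  shows "1 + (mink (y,1) N)^2 / ((1 - (norm y)\<^sup>2) * mink N N) \<le> (Ach x y)^2"
proof -
  define m where "m = mink (y,1) N"
  define Y' where "Y' = (y,1) - (m / mink N N) *\<^sub>R N"
  have xx: "mink (x,1) (x,1) < 0" using x by (simp add: mink_pt_self abs_square_less_1)
  have e1: "mink (x,1) Y' = x \<bullet> y - 1"
    unfolding Y'_def using xN by (simp add: mink_simps mink_def inner_diff_right)
  have e2: "mink Y' Y' = ((norm y)^2 - 1) - m^2 / mink N N"
    unfolding Y'_def using N
    by (simp add: mink_simps mink_pt_self m_def mink_comm[of N "(y,1)"] power2_eq_square field_simps)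
  have "mink (x,1) (x,1) * mink Y' Y' \<le> (mink (x,1) Y')^2" by (rule mink_rcs[OF xx])
  then have h0: "((norm x)^2 - 1) * (((norm y)^2 - 1) - m^2 / mink N N) \<le> (x \<bullet> y - 1)^2"
    by (simp only: e1 e2 mink_pt_self)
  have "((norm x)^2 - 1) * (((norm y)^2 - 1) - m^2 / mink N N) = (1 - (norm x)^2) * ((1 - (norm y)^2) + m^2 / mink N N)"
    using N by (simp add: field_simps)
  moreover have "(x \<bullet> y - 1)^2 = (1 - x \<bullet> y)^2" by (simp add: power2_commute)
  ultimately have h: "(1 - (norm x)^2) * ((1 - (norm y)^2) + m^2 / mink N N) \<le> (1 - x \<bullet> y)^2"
    using h0 by simp
  have qx: "0 < 1 - (norm x)^2" using q_pos x by simp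
  have qy: "0 < 1 - (norm y)^2" using q_pos y by simp
  have "1 + m^2 / ((1 - (norm y)\<^sup>2) * mink N N) = ((1 - (norm x)^2) * ((1 - (norm y)^2) + m^2 / mink N N)) / ((1 - (norm x)\<^sup>2) * (1 - (norm y)\<^sup>2))"
    using aux_frac1[OF qx qy N] by simp
  also have "\<dots> \<le> (1 - x \<bullet> y)^2 / ((1 - (norm x)\<^sup>2) * (1 - (norm y)\<^sup>2))"
    using h qx qy by (intro divide_right_mono) auto
  also have "\<dots> = (Ach x y)^2" using Ach_sq[OF x y] by simp
  finally show ?thesis by (simp add: m_def)
qed



lemma inner_self_mult: "(x::complex) \<bullet> x = norm x * norm x"
  by (simp add: power2_norm_eq_inner[symmetric] power2_eq_square)

lemma timelike_future:
  fixes y :: complex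
  assumes FF: "mink F F < 0" and y: "norm y < 1" and Fy: "mink F (y,1) < 0"
  shows "snd F > 0"
proof (rule ccontr)
  assume "\<not> snd F > 0"
  then have t: "snd F \<le> 0" by simp
  obtain f t where F: "F = (f,t)" by fastforce
  have "(norm f)^2 < t^2" using FF by (simp add: F mink_def inner_self_mult power2_eq_square)
  then have nf: "norm f < \<bar>t\<bar>" using power2_less_imp_less[of "norm f" "\<bar>t\<bar>"] by simp
  have "\<bar>f \<bullet> y\<bar> \<le> norm f * norm y" by (rule Cauchy_Schwarz_ineq2)
  also have "\<dots> \<le> norm f" using y by (simp add: mult_left_le)
  finally have "- norm f \<le> f \<bullet> y" by simp
  moreover have "f \<bullet> y - t < 0" using Fy by (simp add: F mink_def)
  ultimately show False using nf t F by simp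
qed

lemma foot_exists:
  fixes y :: complex
  assumes y: "norm y < 1" and N: "mink N N > 0"
  shows "\<exists>x0. norm x0 < 1 \<and> mink (x0,1) N = 0 \<and>
     Ach x0 y = sqrt (1 + (mink (y,1) N)^2 / ((1 - (norm y)^2) * mink N N))"
proof -
  define m where "m = mink (y,1) N"
  define nn where "nn = mink N N"
  define D where "D = (1 - (norm y)^2) + m^2 / nn"
  define F where "F = (y,1) - (m / nn) *\<^sub>R N"
  have qy: "0 < 1 - (norm y)^2" using q_pos[OF y] .
  have nn: "nn > 0" using N by (simp add: nn_def)
  have D: "D > 0" unfolding D_def using qy nn by (simp add: add_pos_nonneg)
  have FN: "mink F N = 0" unfolding F_def using nn by (simp add: mink_simps m_def nn_def)
  have FF: "mink F F = - D"
    unfolding F_def D_def using nn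
    by (simp add: mink_simps mink_pt_self m_def nn_def mink_comm[of N "(y,1)"] power2_eq_square field_simps)
  have Fy: "mink F (y,1) = - D"
    unfolding F_def D_def using nn
    by (simp add: mink_simps mink_pt_self m_def nn_def mink_comm[of N "(y,1)"] power2_eq_square field_simps)
  have t: "snd F > 0" using timelike_future[of F y] FF Fy D y by simp
  define t where "t = snd F"
  define x0 where "x0 = (1/t) *\<^sub>R fst F"
  have X0: "(x0, 1) = (1/t) *\<^sub>R F" using t by (simp add: x0_def t_def prod_eq_iff)
  have m1: "mink (x0,1) Z = (1/t) * mink F Z" for Z by (simp add: X0 mink_simps)
  have l1: "mink (x0,1) N = 0" by (simp add: m1 FN)
  have "mink (x0,1) (x0,1) = - D / t^2"
    by (simp add: X0 mink_simps FF power2_eq_square)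
  then have qx: "1 - (norm x0)^2 = D / t^2" by (simp add: mink_pt_self)
  have nx: "norm x0 < 1"
  proof -
    have "0 < 1 - (norm x0)^2" using qx D t t_def by simp
    then have "(norm x0)^2 < 1^2" by simp
    then show ?thesis using power2_less_imp_less[of "norm x0" 1] by simp
  qed
  have "mink (x0,1) (y,1) = - D / t" by (simp add: m1 Fy)
  then have i1: "1 - x0 \<bullet> y = D / t" by (simp add: mink_pair)
  have tt: "t > 0" using t t_def by simp
  have "Ach x0 y = (D / t) / sqrt (D / t^2 * (1 - (norm y)^2))"
    unfolding Ach_def i1 qx ..
  also have "sqrt (D / t^2 * (1 - (norm y)^2)) = sqrt D * sqrt (1 - (norm y)^2) / t"
    using tt by (simp add: real_sqrt_mult real_sqrt_divide)
  also have "(D / t) / (sqrt D * sqrt (1 - (norm y)^2) / t) = sqrt D / sqrt (1 - (norm y)^2)"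
    using tt D qy by (simp add: field_simps)
  also have "\<dots> = sqrt (D / (1 - (norm y)^2))" by (simp add: real_sqrt_divide)
  also have "D / (1 - (norm y)^2) = 1 + m^2 / ((1 - (norm y)^2) * nn)"
    unfolding D_def using qy nn by (simp add: field_simps)
  finally show ?thesis using nx l1 by (auto simp: m_def nn_def)
qed

lemma hdist_nonneg: "norm x < 1 \<Longrightarrow> norm y < 1 \<Longrightarrow> 0 \<le> hdist x y"
  by (simp add: hdist_Ach Ach_ge1)

lemma hsetdist_le:
  assumes "H \<subseteq> hdisk" "H' \<subseteq> hdisk" "x \<in> H" "y \<in> H'"
  shows "hsetdist H H' \<le> hdist x y"
  unfolding hsetdist_def
proof (rule cInf_lower)
  show "hdist x y \<in> {hdist x y |x y. x \<in> H \<and> y \<in> H'}" using assms by blast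
  show "bdd_below {hdist x y |x y. x \<in> H \<and> y \<in> H'}"
    by (rule bdd_belowI[of _ 0]) (use assms in \<open>auto simp: hdisk_def intro!: hdist_nonneg\<close>)
qed

lemma hsetdist_ge:
  assumes "H \<noteq> {}" "H' \<noteq> {}" "\<And>x y. x \<in> H \<Longrightarrow> y \<in> H' \<Longrightarrow> d \<le> hdist x y"
  shows "d \<le> hsetdist H H'"
  unfolding hsetdist_def
  by (rule cInf_greatest) (use assms in auto)

lemma hsetdist_nonneg:
  assumes "H \<subseteq> hdisk" "H' \<subseteq> hdisk" "H \<noteq> {}" "H' \<noteq> {}"
  shows "0 \<le> hsetdist H H'"
  by (rule hsetdist_ge) (use assms in \<open>auto simp: hdisk_def intro!: hdist_nonneg\<close>)

lemma arcosh_mono_le: "1 \<le> (x::real) \<Longrightarrow> x \<le> y \<Longrightarrow> arcosh x \<le> arcosh y"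
  using arcosh_less_iff_real[of y x] by (simp add: not_less[symmetric])

lemma hline_sub: "hline a b \<subseteq> hdisk"
  by (auto simp: hline_def hdisk_def)

lemma mink_line: "mink (x,1) (a,b) = x \<bullet> a - b"
  by (simp add: mink_def)

lemma valid_of_mink:
  assumes "mink (a,b) (a,b) > 0"
  shows "valid_line a b"
proof -
  have "b^2 < (norm a)^2" using assms by (simp add: mink_def inner_self_mult power2_eq_square)
  then have "\<bar>b\<bar> < norm a" using power2_less_imp_less[of "\<bar>b\<bar>" "norm a"] by simp
  then show ?thesis by (auto simp: valid_line_def)
qed

lemma mink_of_valid:
  assumes "valid_line a b"
  shows "mink (a,b) (a,b) > 0"
proof -
  have "\<bar>b\<bar> < norm a" using assms by (simp add: valid_line_def)
  then have "\<bar>b\<bar>^2 < (norm a)^2" by (intro power_strict_mono) auto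
  then show ?thesis by (simp add: mink_def inner_self_mult power2_eq_square)
qed



definition fdist :: "complex \<times> real \<Rightarrow> complex \<Rightarrow> real" where
  "fdist N x = - mink (x,1) N / sqrt (1 - (norm x)^2)"

lemma mink_expand: "mink (r *\<^sub>R W - N) (r *\<^sub>R W - N) = r^2 * mink W W - 2 * r * mink W N + mink N N"
  by (simp add: mink_simps mink_comm[of N W] power2_eq_square algebra_simps)

lemma constr_line:
  fixes w :: complex
  assumes N: "mink N N > 0" and w: "norm w < 1" and fw: "fdist N w > 0"
  defines "N' \<equiv> (fdist N w / sqrt (1 - (norm w)^2)) *\<^sub>R (w,1) - N"
  shows "mink N' N' = (fdist N w)^2 + mink N N"
    and "mink (w,1) N' = 0"
    and "\<And>x. norm x < 1 \<Longrightarrow> fdist N x \<le> fdist N w \<Longrightarrow> mink (x,1) N' \<le> 0"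
    and "\<And>x. norm x \<le> 1 \<Longrightarrow> mink (x,1) N = 0 \<Longrightarrow> mink (x,1) N' \<noteq> 0"
    and "\<And>y. norm y < 1 \<Longrightarrow> mink (y,1) N' = 0 \<Longrightarrow> (fdist N w)^2 * (1 - (norm y)^2) \<le> (mink (y,1) N)^2"
proof -
  define s where "s = sqrt (1 - (norm w)^2)"
  define f where "f = fdist N w"
  define \<alpha> where "\<alpha> = f / s"
  have s: "s > 0" using q_pos[OF w] by (simp add: s_def)
  have ss: "s * s = 1 - (norm w)^2" using q_pos[OF w] by (simp add: s_def)
  have wN: "mink (w,1) N = - f * s" using s by (simp add: f_def fdist_def s_def)
  have al: "\<alpha> > 0" using fw s by (simp add: \<alpha>_def f_def)
  have gen: "mink (x,1) N' = \<alpha> * (x \<bullet> w - 1) - mink (x,1) N" for x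
    by (simp add: N'_def \<alpha>_def f_def s_def mink_simps mink_pair right_diff_distrib diff_divide_distrib)
  show "mink N' N' = (fdist N w)^2 + mink N N"
  proof -
    have "mink N' N' = \<alpha>^2 * ((norm w)^2 - 1) - 2 * \<alpha> * mink (w,1) N + mink N N"
      unfolding N'_def mink_expand \<alpha>_def f_def s_def mink_pt_self by simp
    also have "\<dots> = f^2 + mink N N"
    proof -
      have ss2: "(norm w)^2 - 1 = - (s * s)" using ss by simp
      have "\<alpha>^2 * ((norm w)^2 - 1) = - (f^2)" using s unfolding ss2 \<alpha>_def by (simp add: power2_eq_square)
      moreover have "2 * \<alpha> * mink (w,1) N = - (2 * f^2)" using s unfolding wN \<alpha>_def by (simp add: power2_eq_square)
      ultimately show ?thesis by simp
    qed
    finally show ?thesis by (simp add: f_def)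
  qed
  show "mink (w,1) N' = 0"
  proof -
    have ww: "w \<bullet> w - 1 = - (s * s)" using ss by (simp add: power2_norm_eq_inner)
    show ?thesis unfolding gen wN \<alpha>_def ww using s by simp
  qed
  show "mink (x,1) N' \<le> 0" if x: "norm x < 1" and fx: "fdist N x \<le> fdist N w" for x
  proof -
    define sx where "sx = sqrt (1 - (norm x)^2)"
    have sx: "sx > 0" using q_pos[OF x] by (simp add: sx_def)
    have xN: "mink (x,1) N = - fdist N x * sx" using sx by (simp add: fdist_def sx_def)
    have e: "1 - x \<bullet> w = Ach x w * sx * s" using one_minus_inner_eq[OF x w] by (simp add: sx_def s_def)
    have "f * sx \<le> \<alpha> * (Ach x w * sx * s)"
    proof -
      have "f * sx \<le> f * (Ach x w * sx)" using Ach_ge1[OF x w] sx fw f_def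
        by (simp add: mult_left_mono mult_le_cancel_right1)
      also have "\<dots> = \<alpha> * (Ach x w * sx * s)" using s by (simp add: \<alpha>_def)
      finally show ?thesis .
    qed
    moreover have "fdist N x * sx \<le> f * sx" using fx sx by (simp add: f_def)
    ultimately have "fdist N x * sx \<le> \<alpha> * (1 - x \<bullet> w)" using e by simp
    then show ?thesis unfolding gen xN by (simp add: algebra_simps)
  qed
  show "mink (x,1) N' \<noteq> 0" if x: "norm x \<le> 1" and xN: "mink (x,1) N = 0" for x
  proof -
    have "w \<bullet> x < 1" using inner_lt1[OF w x] .
    then have "x \<bullet> w - 1 < 0" by (simp add: inner_commute)
    then show ?thesis unfolding gen xN using al by (simp add: mult_pos_neg)
  qed
  show "(fdist N w)^2 * (1 - (norm y)^2) \<le> (mink (y,1) N)^2" if y: "norm y < 1" and yN: "mink (y,1) N' = 0" for y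
  proof -
    have e: "mink (y,1) N = \<alpha> * (y \<bullet> w - 1)" using yN unfolding gen by simp
    have r: "(1 - (norm y)\<^sup>2) * (1 - (norm w)\<^sup>2) \<le> (1 - y \<bullet> w)^2" by (rule rcs_pt[OF y w])
    have "(fdist N w)^2 * (1 - (norm y)^2) = \<alpha>^2 * ((1 - (norm y)\<^sup>2) * (1 - (norm w)\<^sup>2))"
      using s unfolding ss[symmetric] \<alpha>_def f_def by (simp add: power2_eq_square field_simps)
    also have "\<dots> \<le> \<alpha>^2 * (1 - y \<bullet> w)^2" using r by (simp add: mult_left_mono)
    also have "\<dots> = (mink (y,1) N)^2" by (simp add: e power2_eq_square algebra_simps)
    finally show ?thesis .
  qed
qed

lemma compact_disk_bound:
  assumes "compact C" "C \<subseteq> hdisk" "C \<noteq> {}"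
  shows "\<exists>\<rho>. 0 \<le> \<rho> \<and> \<rho> < 1 \<and> (\<forall>x\<in>C. norm x \<le> \<rho>)"
proof -
  obtain z where z: "z \<in> C" "\<forall>y\<in>C. norm y \<le> norm z"
    using continuous_attains_sup[OF assms(1) assms(3), of norm] by (auto intro: continuous_intros)
  then show ?thesis using assms(2) by (intro exI[of _ "norm z"]) (auto simp: hdisk_def)
qed

lemma Ach_bound:
  fixes x y :: complex
  assumes "0 \<le> \<rho>" "\<rho> < 1" "norm x \<le> \<rho>" "norm y \<le> \<rho>"
  shows "Ach x y \<le> 2 / (1 - \<rho>^2)"
proof -
  have x: "norm x < 1" "norm y < 1" using assms by auto
  have r2: "\<rho>^2 < 1" using assms by (simp add: abs_square_less_1)
  have "1 - x \<bullet> y \<le> 2"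
  proof -
    have "\<bar>x \<bullet> y\<bar> \<le> norm x * norm y" by (rule Cauchy_Schwarz_ineq2)
    also have "\<dots> \<le> 1 * 1" using x by (intro mult_mono) auto
    finally show ?thesis by simp
  qed
  moreover have "1 - \<rho>^2 \<le> sqrt ((1 - (norm x)\<^sup>2) * (1 - (norm y)\<^sup>2))"
  proof -
    have a: "1 - \<rho>^2 \<le> 1 - (norm x)^2" using assms power_mono[of "norm x" \<rho> 2] by simp
    have b: "1 - \<rho>^2 \<le> 1 - (norm y)^2" using assms power_mono[of "norm y" \<rho> 2] by simp
    have "(1 - \<rho>^2) * (1 - \<rho>^2) \<le> (1 - (norm x)\<^sup>2) * (1 - (norm y)\<^sup>2)"
      using a b r2 by (intro mult_mono) auto
    then have "sqrt ((1 - \<rho>^2) * (1 - \<rho>^2)) \<le> sqrt ((1 - (norm x)\<^sup>2) * (1 - (norm y)\<^sup>2))"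
      by (rule real_sqrt_le_mono)
    then show ?thesis using r2 by simp
  qed
  moreover have "0 < 1 - x \<bullet> y" using inner_lt1[of x y] x by simp
  ultimately show ?thesis unfolding Ach_def using r2
    by (meson frac_le less_eq_real_def zero_less_numeral diff_gt_0_iff_gt)
qed

lemma supports_unfold:
  assumes "supports H C"
  obtains a b where "valid_line a b" "H = hline a b" "\<And>x. x \<in> C \<Longrightarrow> mink (x,1) (a,b) \<le> 0" "H \<inter> C \<noteq> {}"
  using assms unfolding supports_def by (auto simp: mink_line)

definition wset :: "complex set \<Rightarrow> complex set \<Rightarrow> real set" where
  "wset H C = {hsetdist H H' | H'. supports H' C \<and> ultraparallel H H'}"

lemma hwidth_wset: "hwidth H C = Sup (wset H C)"
  by (simp add: hwidth_def wset_def)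

lemma wset_props:
  assumes C: "convex_body C" and H: "supports H C"
  shows "wset H C \<noteq> {}" "bdd_above (wset H C)" "\<And>s. s \<in> wset H C \<Longrightarrow> 0 \<le> s"
proof -
  have Cd: "C \<subseteq> hdisk" and Cc: "compact C" and Ci: "interior C \<noteq> {}"
    using C by (auto simp: convex_body_def)
  have Cne: "C \<noteq> {}" using Ci by auto
  obtain a b where ab: "valid_line a b" "H = hline a b" "\<And>x. x \<in> C \<Longrightarrow> mink (x,1) (a,b) \<le> 0" "H \<inter> C \<noteq> {}"
    using supports_unfold[OF H] by blast
  let ?N = "(a,b)"
  have N: "mink ?N ?N > 0" using mink_of_valid[OF ab(1)] .
  obtain p where p: "p \<in> H" "p \<in> C" using ab(4) by auto
  obtain \<rho> where rho: "0 \<le> \<rho>" "\<rho> < 1" "\<forall>x\<in>C. norm x \<le> \<rho>"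
    using compact_disk_bound[OF Cc Cd Cne] by blast
  show "bdd_above (wset H C)"
  proof (rule bdd_aboveI[of _ "arcosh (2 / (1 - \<rho>^2))"])
    fix s assume "s \<in> wset H C"
    then obtain H' where H': "s = hsetdist H H'" "supports H' C" by (auto simp: wset_def)
    obtain a' b' where ab': "valid_line a' b'" "H' = hline a' b'" "H' \<inter> C \<noteq> {}"
      using supports_unfold[OF H'(2)] by metis
    obtain q where q: "q \<in> H'" "q \<in> C" using ab'(3) by auto
    have "s \<le> hdist p q" unfolding H'(1)
      by (rule hsetdist_le) (use p q ab ab' hline_sub in auto)
    also have "\<dots> \<le> arcosh (2 / (1 - \<rho>^2))"
      unfolding hdist_Ach
      using rho p q Cd by (intro arcosh_mono_le Ach_ge1 Ach_bound) (auto simp: hdisk_def)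
    finally show "s \<le> arcosh (2 / (1 - \<rho>^2))" .
  qed
  show "0 \<le> s" if sw: "s \<in> wset H C" for s
  proof -
    obtain H' where H': "s = hsetdist H H'" "supports H' C" using sw by (auto simp: wset_def)
    obtain a' b' where ab': "valid_line a' b'" "H' = hline a' b'" "H' \<inter> C \<noteq> {}"
      using supports_unfold[OF H'(2)] by metis
    show ?thesis unfolding H'(1)
      by (rule hsetdist_nonneg) (use ab ab' hline_sub in auto)
  qed
  have nz: "\<forall>x\<in>C. sqrt (1 - (norm x)^2) \<noteq> 0"
  proof
    fix x assume "x \<in> C"
    then have "norm x < 1" using Cd by (auto simp: hdisk_def)
    then show "sqrt (1 - (norm x)^2) \<noteq> 0" using q_pos[of x] by simp
  qed
  have cont: "continuous_on C (fdist ?N)"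
    unfolding fdist_def mink_line
    using nz by (intro continuous_intros) auto
  obtain w where w: "w \<in> C" "\<forall>y\<in>C. fdist ?N y \<le> fdist ?N w"
    using continuous_attains_sup[OF Cc Cne cont] by blast
  have wd: "norm w < 1" using w Cd by (auto simp: hdisk_def)
  have fw: "fdist ?N w > 0"
  proof (rule ccontr)
    assume "\<not> fdist ?N w > 0"
    then have "\<forall>y\<in>C. fdist ?N y \<le> 0" using w by force
    then have "\<forall>y\<in>C. mink (y,1) ?N = 0"
    proof (intro ballI)
      fix y assume y: "y \<in> C" and h: "\<forall>y\<in>C. fdist ?N y \<le> 0"
      have yd: "norm y < 1" using y Cd by (auto simp: hdisk_def)
      have "0 < sqrt (1 - (norm y)^2)" using q_pos[OF yd] by simp
      moreover have "0 \<le> mink (y,1) ?N / sqrt (1 - (norm y)^2)" using h y by (simp add: fdist_def)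
      ultimately have "mink (y,1) ?N \<ge> 0" by (simp add: zero_le_divide_iff)
      then show "mink (y,1) ?N = 0" using ab(3)[OF y] by simp
    qed
    then have "C \<subseteq> {x. a \<bullet> x = b}" by (auto simp: mink_line inner_commute)
    then have "interior C \<subseteq> interior {x. a \<bullet> x = b}" by (rule interior_mono)
    moreover have "a \<noteq> 0" using ab(1) by (simp add: valid_line_def)
    ultimately show False using Ci by simp
  qed
  define N' where "N' = (fdist ?N w / sqrt (1 - (norm w)^2)) *\<^sub>R (w,1) - ?N"
  note cl = constr_line[OF N wd fw, folded N'_def]
  define a' where "a' = fst N'"
  define b' where "b' = snd N'"
  have N'eq: "N' = (a',b')" by (simp add: a'_def b'_def)
  have v': "valid_line a' b'" using cl(1) N by (intro valid_of_mink) (simp add: N'eq[symmetric] add_nonneg_pos)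
  have "supports (hline a' b') C"
    unfolding supports_def
  proof (intro exI conjI)
    show "valid_line a' b'" by fact
    show "C \<subseteq> {x. x \<bullet> a' \<le> b'}"
    proof
      fix x assume x: "x \<in> C"
      have "mink (x,1) N' \<le> 0" using cl(3)[of x] x w Cd by (auto simp: hdisk_def)
      then show "x \<in> {x. x \<bullet> a' \<le> b'}" by (simp add: N'eq mink_line)
    qed
    show "hline a' b' \<inter> C \<noteq> {}" using cl(2) w wd by (auto simp: hline_def N'eq mink_line)
  qed simp
  moreover have "ultraparallel H (hline a' b')"
    unfolding ultraparallel_def
  proof (intro exI conjI)
    show "valid_line a b" "valid_line a' b'" "H = hline a b" by (fact ab(1), fact v', fact ab(2))
    show "\<not> (\<exists>x. norm x \<le> 1 \<and> x \<bullet> a = b \<and> x \<bullet> a' = b')"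
      using cl(4) by (auto simp: N'eq mink_line)
  qed simp
  ultimately show "wset H C \<noteq> {}" by (auto simp: wset_def)
qed

lemma hwidth_nonneg:
  assumes "convex_body C" "supports H C"
  shows "0 \<le> hwidth H C"
proof -
  note w = wset_props[OF assms]
  obtain s where "s \<in> wset H C" using w(1) by blast
  then show ?thesis unfolding hwidth_wset using w by (intro cSup_upper2[of s]) auto
qed



lemma cos_shift_int: "cos (y + 2 * pi * of_int n) = cos y"
  using cos_int_2pin[of n] sin_int_2pin[of n] by (simp add: cos_add mult.commute)

lemma cos_abs_le: "\<bar>t\<bar> \<le> b \<Longrightarrow> b \<le> pi \<Longrightarrow> cos b \<le> cos t"
proof -
  assume a: "\<bar>t\<bar> \<le> b" "b \<le> pi"
  have "cos b \<le> cos \<bar>t\<bar>" using a by (intro cos_monotone_0_pi_le) auto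
  moreover have "cos \<bar>t\<bar> = cos t" by (cases "t \<ge> 0") auto
  ultimately show ?thesis by simp
qed

lemma cos_sum_ge:
  assumes "0 \<le> x" "x \<le> a" "a \<le> pi"
  shows "1 + cos a \<le> cos x + cos (a - x)"
proof -
  define t where "t = x - a/2"
  have e1: "cos x + cos (a - x) = 2 * cos (a/2) * cos t"
  proof -
    have "cos x = cos (a/2 + t)" "cos (a - x) = cos (a/2 - t)" by (auto simp: t_def)
    then show ?thesis by (simp add: cos_add cos_diff)
  qed
  have e2: "1 + cos a = 2 * cos (a/2) * cos (a/2)"
    using cos_double_cos[of "a/2"] by (simp add: power2_eq_square)
  have ta: "\<bar>t\<bar> \<le> a/2" unfolding t_def using assms by arith
  have m: "cos (a/2) \<le> cos t" using assms ta by (intro cos_abs_le) auto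
  have p: "0 \<le> cos (a/2)" using assms by (intro cos_ge_zero) auto
  show ?thesis unfolding e1 e2 using m p by (simp add: mult_left_mono)
qed

lemma cos_mod_k:
  assumes "k > 0"
  shows "cos (\<alpha> + 2 * pi * of_int m / real k - \<psi>) = cos (\<alpha> + 2 * pi * real (nat (m mod int k)) / real k - \<psi>)"
proof -
  have "(of_int (int k * (m div int k) + m mod int k) :: real) = real k * of_int (m div int k) + of_int (m mod int k)"
    by (simp only: of_int_add of_int_mult of_int_of_nat_eq)
  then have mm: "(of_int m :: real) = real k * of_int (m div int k) + of_int (m mod int k)" by simp
  have nn: "real (nat (m mod int k)) = of_int (m mod int k)" using assms by simp
  have "2 * pi * of_int m / real k = 2 * pi * of_int (m mod int k) / real k + 2 * pi * of_int (m div int k)"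
    using assms unfolding mm by (simp add: field_simps)
  then have "\<alpha> + 2 * pi * of_int m / real k - \<psi> = (\<alpha> + 2 * pi * real (nat (m mod int k)) / real k - \<psi>) + 2 * pi * of_int (m div int k)"
    by (simp add: nn)
  then show ?thesis by (simp only: cos_shift_int)
qed

lemma near_vertex:
  assumes k: "odd k" "k \<ge> 3"
  shows "\<exists>l1<k. \<exists>l2<k. cos (pi / real k) \<le> cos (\<alpha> + 2 * pi * real l1 / real k - \<psi>) \<and>
     1 + cos (pi / real k) \<le> cos (\<alpha> + 2 * pi * real l1 / real k - \<psi>) - cos (\<alpha> + 2 * pi * real l2 / real k - \<psi>)"
proof -
  have kp: "real k > 0" using k by simp
  define x where "x = (\<psi> - \<alpha>) * real k / (2 * pi)"
  define l where "l = \<lfloor>x + 1/2\<rfloor>"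
  have l1: "of_int l \<le> x + 1/2" "x + 1/2 < of_int l + 1" unfolding l_def by linarith+
  define \<delta> where "\<delta> = \<alpha> + 2 * pi * of_int l / real k - \<psi>"
  have dx: "\<delta> = 2 * pi * (of_int l - x) / real k" unfolding \<delta>_def x_def using kp by (simp add: field_simps)
  have d1: "\<delta> \<le> pi / real k"
  proof -
    have "2 * pi * (of_int l - x) \<le> 2 * pi * (1/2)" using l1 by (intro mult_left_mono) auto
    then show ?thesis unfolding dx using kp by (simp add: divide_right_mono)
  qed
  have d2: "- (pi / real k) < \<delta>"
  proof -
    have "2 * pi * (- 1/2) < 2 * pi * (of_int l - x)" using l1 by (intro mult_strict_left_mono) auto
    then have "(2 * pi * (- 1/2)) / real k < 2 * pi * (of_int l - x) / real k" using kp by (intro divide_strict_right_mono) auto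
    then show ?thesis unfolding dx by simp
  qed
  have pk: "pi / real k \<le> pi" using kp k by (simp add: divide_le_eq)
  have pk0: "0 < pi / real k" using kp by simp
  define L1 where "L1 = nat (l mod int k)"
  have L1k: "L1 < k" unfolding L1_def using k by (simp add: nat_less_iff)
  have cL1: "cos (\<alpha> + 2 * pi * real L1 / real k - \<psi>) = cos \<delta>"
    unfolding L1_def \<delta>_def using cos_mod_k[of k \<alpha> l \<psi>] kp by simp
  have c1: "cos (pi / real k) \<le> cos \<delta>" using d1 d2 pk by (intro cos_abs_le) auto
  have "\<exists>l2<k. 1 + cos (pi / real k) \<le> cos \<delta> - cos (\<alpha> + 2 * pi * real l2 / real k - \<psi>)"
  proof (cases "\<delta> \<ge> 0")
    case True
    define m where "m = l + int ((k - 1) div 2)"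
    have km: "2 * real ((k - 1) div 2) = real k - 1" using k by (simp add: real_of_nat_div)
    have "\<alpha> + 2 * pi * of_int m / real k - \<psi> = \<delta> + pi * (2 * real ((k - 1) div 2)) / real k"
      using kp unfolding m_def \<delta>_def by (simp add: field_simps)
    also have "\<dots> = (\<delta> - pi / real k) + pi" unfolding km using kp by (simp add: field_simps)
    finally have "cos (\<alpha> + 2 * pi * of_int m / real k - \<psi>) = - cos (pi / real k - \<delta>)"
      by (simp add: cos_minus[of "pi / real k - \<delta>", symmetric])
    moreover have "1 + cos (pi / real k) \<le> cos \<delta> + cos (pi / real k - \<delta>)"
      using True d1 pk by (intro cos_sum_ge) auto
    ultimately show ?thesis
      using cos_mod_k[of k \<alpha> m \<psi>] kp k by (intro exI[of _ "nat (m mod int k)"]) (auto simp: nat_less_iff)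
  next
    case False
    define m where "m = l + int ((k + 1) div 2)"
    have km: "2 * real ((k + 1) div 2) = real k + 1"
    proof -
      have "2 * ((k + 1) div 2) = k + 1" using k by (metis odd_two_times_div_two_succ even_add odd_one dvd_mult_div_cancel)
      then have "real (2 * ((k + 1) div 2)) = real (k + 1)" by (simp only:)
      then show ?thesis by simp
    qed
    have "\<alpha> + 2 * pi * of_int m / real k - \<psi> = \<delta> + pi * (2 * real ((k + 1) div 2)) / real k"
      using kp unfolding m_def \<delta>_def by (simp add: field_simps)
    also have "\<dots> = (\<delta> + pi / real k) + pi" unfolding km using kp by (simp add: field_simps)
    finally have "cos (\<alpha> + 2 * pi * of_int m / real k - \<psi>) = - cos (pi / real k - (-\<delta>))"
      by (simp add: add.commute)
    moreover have "1 + cos (pi / real k) \<le> cos (-\<delta>) + cos (pi / real k - (-\<delta>))"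
      using False d2 pk by (intro cos_sum_ge) auto
    ultimately show ?thesis
      using cos_mod_k[of k \<alpha> m \<psi>] kp k by (intro exI[of _ "nat (m mod int k)"]) (auto simp: nat_less_iff)
  qed
  then obtain l2 where "l2 < k" "1 + cos (pi / real k) \<le> cos \<delta> - cos (\<alpha> + 2 * pi * real l2 / real k - \<psi>)" by blast
  then show ?thesis using L1k cL1 c1 by (intro exI[of _ L1] conjI exI[of _ l2]) auto
qed

lemma opposite_vertex:
  assumes k: "odd k" "k \<ge> 3" and l: "l < k"
  shows "- cos (2 * pi * real l / real k) \<le> cos (pi / real k)"
proof -
  have kp: "real k > 0" using k by simp
  have pk: "pi / real k \<le> pi" using kp k by (simp add: divide_le_eq)
  have "2 * l \<noteq> k" using k by auto
  then consider "2 * l + 1 \<le> k" | "k + 1 \<le> 2 * l" by linarith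
  then show ?thesis
  proof cases
    case 1
    then have r: "2 * real l + 1 \<le> real k" by linarith
    have "- cos (2 * pi * real l / real k) = cos (pi - 2 * pi * real l / real k)" by simp
    also have "\<dots> \<le> cos (pi / real k)"
    proof (rule cos_monotone_0_pi_le)
      show "0 \<le> pi / real k" using kp by simp
      have "pi * (2 * real l + 1) \<le> pi * real k" using r by simp
      then show "pi / real k \<le> pi - 2 * pi * real l / real k" using kp by (simp add: field_simps)
      show "pi - 2 * pi * real l / real k \<le> pi" using kp by simp
    qed
    finally show ?thesis .
  next
    case 2
    then have r: "real k + 1 \<le> 2 * real l" by linarith
    have lk: "real l < real k" using l by simp
    have "- cos (2 * pi * real l / real k) = cos (2 * pi * real l / real k - pi)" by simp
    also have "\<dots> \<le> cos (pi / real k)"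
    proof (rule cos_monotone_0_pi_le)
      show "0 \<le> pi / real k" using kp by simp
      have "pi * (real k + 1) \<le> pi * (2 * real l)" using r by simp
      then show "pi / real k \<le> 2 * pi * real l / real k - pi" using kp by (simp add: field_simps)
      have "pi * (2 * real l) \<le> pi * (2 * real k)" using lk by simp
      then show "2 * pi * real l / real k - pi \<le> pi" using kp by (simp add: field_simps)
    qed
    finally show ?thesis .
  qed
qed

lemma opposite_vertex_eq:
  assumes k: "odd k" "k \<ge> 3"
  shows "(k - 1) div 2 < k" "- cos (2 * pi * real ((k - 1) div 2) / real k) = cos (pi / real k)"
proof -
  show "(k - 1) div 2 < k" using k by simp
  have kp: "real k > 0" using k by simp
  have km: "2 * real ((k - 1) div 2) = real k - 1"
  proof -
    have "2 * ((k - 1) div 2) = k - 1" using k by simp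
    then have "real (2 * ((k - 1) div 2)) = real (k - 1)" by (simp only:)
    moreover have "real (k - 1) = real k - 1" using k by (simp add: of_nat_diff)
    ultimately show ?thesis by simp
  qed
  have "2 * pi * real ((k - 1) div 2) / real k = pi * (2 * real ((k - 1) div 2)) / real k" by simp
  also have "\<dots> = pi * (real k - 1) / real k" by (simp only: km)
  also have "\<dots> = pi - pi / real k" using kp by (simp add: field_simps)
  finally have "2 * pi * real ((k - 1) div 2) / real k = pi - pi / real k" .
  then show "- cos (2 * pi * real ((k - 1) div 2) / real k) = cos (pi / real k)" by simp
qed



lemma unit_step:
  fixes z w :: complex
  assumes "norm z = 1" "norm w = 1" "Re z = Re w"
  shows "z = w \<or> z = cnj w"
proof -
  have "(Im z)^2 = (Im w)^2" using assms cmod_power2[of z] cmod_power2[of w] by simp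
  then have "Im z = Im w \<or> Im z = - Im w" by (simp add: power2_eq_iff)
  then show ?thesis using assms(3) by (auto simp: complex_eq_iff)
qed

lemma inner_as_Re: "(u::complex) \<bullet> v = Re (v * cnj u)"
  by (simp add: inner_complex_def)

lemma unit_roots:
  fixes u :: "nat \<Rightarrow> complex" and k :: nat
  assumes k: "odd k" "k \<ge> 3" and un: "\<And>i. i < k \<Longrightarrow> norm (u i) = 1" and inj: "inj_on u {..<k}"
    and eq: "\<And>i. i < k \<Longrightarrow> u i \<bullet> u (Suc i mod k) = u 0 \<bullet> u 1"
  shows "u ` {..<k} = (\<lambda>l. u 0 * cis (2 * pi * real l / real k)) ` {..<k}"
proof -
  have k0: "0 < k" using k by simp
  define \<omega> where "\<omega> = u 1 * cnj (u 0)"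
  have u0: "norm (u 0) = 1" using un k0 by simp
  have u0nz: "u 0 \<noteq> 0" using u0 by auto
  have nw: "norm \<omega> = 1" using un[of 0] un[of 1] k by (simp add: \<omega>_def norm_mult)
  have cu: "cnj (u i) * u i = 1" if "i < k" for i
  proof -
    have "of_real ((norm (u i))^2) = u i * cnj (u i)" by (rule complex_norm_square)
    then show ?thesis using un[OF that] by (simp add: mult.commute)
  qed
  have step: "u (Suc i mod k) = u i * \<omega> \<or> u (Suc i mod k) = u i * cnj \<omega>" if i: "i < k" for i
  proof -
    define z where "z = u (Suc i mod k) * cnj (u i)"
    have nz: "norm z = 1" using un[OF i] un[of "Suc i mod k"] k0 by (simp add: z_def norm_mult)
    have "Re z = Re \<omega>" using eq[OF i] by (simp add: z_def \<omega>_def inner_as_Re)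
    then have zz: "z = \<omega> \<or> z = cnj \<omega>" using unit_step[OF nz nw] by simp
    have "u (Suc i mod k) = z * u i" using cu[OF i] by (simp add: z_def mult.assoc)
    then show ?thesis using zz by (auto simp: mult.commute)
  qed
  define \<theta> where "\<theta> = Arg \<omega>"
  have wnz: "\<omega> \<noteq> 0" using nw by auto
  have wc: "\<omega> = cis \<theta>" using nw cis_Arg[OF wnz] by (simp add: \<theta>_def sgn_eq)
  have wc': "cnj \<omega> = cis (- \<theta>)" using wc by (simp add: cis_cnj)
  have walk: "\<exists>a::int. u (i mod k) = u 0 * cis (of_int a * \<theta>) \<and> \<bar>a\<bar> \<le> int i \<and> even (a + int i)"
    if "i \<le> k" for i
    using that
  proof (induction i)
    case 0
    then show ?case by (intro exI[of _ 0]) auto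
  next
    case (Suc i)
    then have ik: "i < k" by simp
    then obtain a where a: "u i = u 0 * cis (of_int a * \<theta>)" "\<bar>a\<bar> \<le> int i" "even (a + int i)"
      using Suc by auto
    from step[OF ik] show ?case
    proof
      assume h: "u (Suc i mod k) = u i * \<omega>"
      show ?case
        by (intro exI[of _ "a + 1"]) (use a h wc in \<open>auto simp: cis_mult algebra_simps\<close>)
    next
      assume h: "u (Suc i mod k) = u i * cnj \<omega>"
      show ?case
        by (intro exI[of _ "a - 1"]) (use a h wc' in \<open>auto simp: cis_mult algebra_simps\<close>)
    qed
  qed
  obtain a where a: "u 0 = u 0 * cis (of_int a * \<theta>)" "\<bar>a\<bar> \<le> int k" "even (a + int k)"
    using walk[of k] by auto
  have ca: "cis (of_int a * \<theta>) = 1" using a(1) u0nz by simp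
  have aodd: "odd a" using a(3) k by simp
  define S where "S = nat \<bar>a\<bar>"
  have "a \<noteq> 0" using aodd by auto
  then have S1: "S \<ge> 1" by (simp add: S_def)
  have Sk: "S \<le> k" using a(2) by (simp add: S_def)
  have cS: "cis (real S * \<theta>) = 1"
  proof (cases "a \<ge> 0")
    case True then show ?thesis using ca by (simp add: S_def)
  next
    case False
    then have "real S * \<theta> = - (of_int a * \<theta>)" by (simp add: S_def)
    then show ?thesis using ca by (metis cis_cnj complex_cnj_one)
  qed
  then have "cos (real S * \<theta>) = 1" by (simp add: complex_eq_iff)
  then obtain n :: int where n: "real S * \<theta> = of_int n * 2 * pi" by (auto simp: cos_one_2pi_int)
  define \<zeta> where "\<zeta> i = u i / u 0" for i
  have zroot: "\<zeta> i ^ S = 1" if i: "i < k" for i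
  proof -
    obtain b where b: "u i = u 0 * cis (of_int b * \<theta>)" using walk[of i] i by auto
    have "\<zeta> i = cis (of_int b * \<theta>)" using b u0nz by (simp add: \<zeta>_def)
    then have "\<zeta> i ^ S = cis (real S * (of_int b * \<theta>))" by (simp add: Complex.DeMoivre)
    also have "real S * (of_int b * \<theta>) = 2 * pi * of_int (b * n)" using n by (simp add: algebra_simps)
    also have "cis (2 * pi * of_int (b * n)) = 1" by (rule cis_multiple_2pi) simp
    finally show ?thesis .
  qed
  have injz: "inj_on \<zeta> {..<k}" using inj u0nz by (auto simp: inj_on_def \<zeta>_def)
  have "card (\<zeta> ` {..<k}) = k" using card_image[OF injz] by simp
  moreover have "\<zeta> ` {..<k} \<subseteq> {z. z ^ S = 1}" using zroot by auto
  moreover have "card {z::complex. z ^ S = 1} = S" using S1 by (intro card_roots_unity_eq) simp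
  moreover have "finite {z::complex. z ^ S = 1}" using S1 by (intro finite_roots_unity) simp
  ultimately have "k \<le> S" by (metis card_mono)
  then have SK: "S = k" using Sk by simp
  have img: "(\<lambda>l. cis (2 * pi * real l / real k)) ` {..<k} = {z. z ^ k = 1}"
    using Complex.bij_betw_roots_unity[OF k0] by (simp add: bij_betw_def)
  have "\<zeta> ` {..<k} = {z. z ^ k = 1}"
  proof (rule card_subset_eq)
    show "finite {z::complex. z ^ k = 1}" using k0 by (intro finite_roots_unity) simp
    show "\<zeta> ` {..<k} \<subseteq> {z. z ^ k = 1}" using zroot SK by auto
    show "card (\<zeta> ` {..<k}) = card {z::complex. z ^ k = 1}"
      using card_image[OF injz] card_roots_unity_eq[OF k0] by simp
  qed
  then have zi: "\<zeta> ` {..<k} = (\<lambda>l. cis (2 * pi * real l / real k)) ` {..<k}" using img by simp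
  have "u ` {..<k} = (\<lambda>z. u 0 * z) ` (\<zeta> ` {..<k})"
    using u0nz by (auto simp: image_image \<zeta>_def)
  also have "\<dots> = (\<lambda>l. u 0 * cis (2 * pi * real l / real k)) ` {..<k}"
    unfolding zi by (simp add: image_image)
  finally show ?thesis .
qed



definition Lb :: "real \<Rightarrow> real \<Rightarrow> complex \<Rightarrow> complex \<times> real \<Rightarrow> complex \<times> real" where
  "Lb g kk c X = (fst X + (kk * (fst X \<bullet> c) + snd X * g) *\<^sub>R c, g * (fst X \<bullet> c) + snd X * g)"

definition Lbinv :: "real \<Rightarrow> real \<Rightarrow> complex \<Rightarrow> complex \<times> real \<Rightarrow> complex \<times> real" where
  "Lbinv g kk c X = (fst X + (kk * (fst X \<bullet> c) - snd X * g) *\<^sub>R c, snd X * g - g * (fst X \<bullet> c))"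

lemma Lb_mink:
  assumes h1: "g^2 * (1 - c \<bullet> c) = 1" and h2: "kk * (1 + g) = g^2"
  shows "mink (Lb g kk c X) (Lb g kk c Y) = mink X Y"
proof -
  obtain z t where X: "X = (z,t)" by fastforce
  obtain w s where Y: "Y = (w,s)" by fastforce
  define p where "p = z \<bullet> c"
  define p' where "p' = w \<bullet> c"
  define C where "C = c \<bullet> c"
  have e: "mink (Lb g kk c X) (Lb g kk c Y) =
     z \<bullet> w + (kk * p' + s * g) * p + (kk * p + t * g) * p' + (kk * p + t * g) * (kk * p' + s * g) * C
     - (g * p + t * g) * (g * p' + s * g)"
    by (simp add: X Y Lb_def mink_def inner_add_left inner_add_right p_def p'_def C_def inner_commute[of c w] inner_commute[of c z] algebra_simps)
  have h1': "g^2 * (1 - C) = 1" using h1 by (simp add: C_def)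
  have "z \<bullet> w + (kk * p' + s * g) * p + (kk * p + t * g) * p' + (kk * p + t * g) * (kk * p' + s * g) * C
     - (g * p + t * g) * (g * p' + s * g) = z \<bullet> w - t * s"
    using h1' h2 by algebra
  then show ?thesis using e by (simp add: X Y mink_def)
qed

lemma Lb_Lbinv:
  assumes h1: "g^2 * (1 - c \<bullet> c) = 1" and h2: "kk * (1 + g) = g^2"
  shows "Lb g kk c (Lbinv g kk c X) = X"
proof -
  obtain z t where X: "X = (z,t)" by fastforce
  define p where "p = z \<bullet> c"
  define C where "C = c \<bullet> c"
  have h1': "g^2 * (1 - C) = 1" using h1 by (simp add: C_def)
  define a1 where "a1 = kk * p - t * g"
  have s2: "g * (p + a1 * C) + (t * g - g * p) * g = t"
    unfolding a1_def using h1' h2 by algebra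
  have s1: "a1 + (kk * (p + a1 * C) + (t * g - g * p) * g) = 0"
    unfolding a1_def using h1' h2 by algebra
  have li: "Lbinv g kk c X = (z + a1 *\<^sub>R c, t * g - g * p)" by (simp add: X Lbinv_def p_def a1_def)
  have ip: "(z + a1 *\<^sub>R c) \<bullet> c = p + a1 * C" by (simp add: inner_add_left p_def C_def)
  have "Lb g kk c (Lbinv g kk c X) = (z + a1 *\<^sub>R c + (kk * (p + a1 * C) + (t * g - g * p) * g) *\<^sub>R c,
       g * (p + a1 * C) + (t * g - g * p) * g)"
    unfolding li Lb_def by (simp only: fst_conv snd_conv ip)
  also have "\<dots> = (z + (a1 + (kk * (p + a1 * C) + (t * g - g * p) * g)) *\<^sub>R c,
       g * (p + a1 * C) + (t * g - g * p) * g)"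
    by (simp only: scaleR_add_left add.assoc)
  also have "\<dots> = X" unfolding s1 s2 by (simp add: X)
  finally show ?thesis .
qed



lemma cis_inner: "cis a \<bullet> (of_real R * cis b) = R * cos (a - b)"
  by (simp add: inner_complex_def cos_diff algebra_simps)

lemma cis_inner2: "cis a \<bullet> cis b = cos (a - b)"
  using cis_inner[of a 1 b] by simp

lemma inner_ofreal_left: "(of_real s * u) \<bullet> (n::complex) = s * (u \<bullet> n)"
  by (simp add: inner_complex_def algebra_simps)

lemma inner_ofreal_right: "(n::complex) \<bullet> (of_real s * u) = s * (n \<bullet> u)"
  by (simp add: inner_complex_def algebra_simps)

locale regpoly =
  fixes k :: nat and c :: complex and r :: real and v :: "nat \<Rightarrow> complex"
  assumes kodd: "odd k" and k3: "k \<ge> 3" and cd: "norm c < 1" and rpos: "r > 0"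
    and vd: "\<And>i. i < k \<Longrightarrow> norm (v i) < 1" and vr: "\<And>i. i < k \<Longrightarrow> hdist c (v i) = r"
    and vinj: "inj_on v {..<k}"
    and veq: "\<And>i. i < k \<Longrightarrow> hdist (v i) (v (Suc i mod k)) = hdist (v 0) (v 1)"
begin

definition "g = 1 / sqrt (1 - (norm c)^2)"
definition "kk = g^2 / (1 + g)"
abbreviation "L \<equiv> Lb g kk c"
abbreviation "Li \<equiv> Lbinv g kk c"

lemma g_pos: "g > 0" using q_pos[OF cd] by (simp add: g_def)

lemma h1: "g^2 * (1 - c \<bullet> c) = 1"
  using q_pos[OF cd] by (simp add: g_def power_divide power2_norm_eq_inner[symmetric])

lemma h2: "kk * (1 + g) = g^2"
  using g_pos by (simp add: kk_def)

lemma L_mink: "mink (L X) (L Y) = mink X Y"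
  by (rule Lb_mink[OF h1 h2])

lemma L_Li: "L (Li X) = X"
  by (rule Lb_Lbinv[OF h1 h2])

lemma Li_mink: "mink (Li X) (Li Y) = mink X Y"
  by (metis L_Li L_mink)

definition Vh :: "nat \<Rightarrow> complex \<times> real" where "Vh i = (1 / sqrt (1 - (norm (v i))^2)) *\<^sub>R (v i, 1)"
definition "Y i = Li (Vh i)"

lemma LY: "L (Y i) = Vh i" by (simp add: Y_def L_Li)

lemma mink_Vh_L: "mink (Vh i) (L X) = mink (Y i) X"
  by (metis LY L_mink)

lemma mink_Vh: "mink (Vh i) N = mink (Y i) (Li N)"
  by (metis mink_Vh_L L_Li)

lemma Vh_pt: "mink (Vh i) N = mink (v i, 1) N / sqrt (1 - (norm (v i))^2)"
  unfolding Vh_def mink_scale_left by simp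

lemma fdist_Vh: "fdist N (v i) = - mink (Vh i) N"
  by (simp add: fdist_def Vh_pt)

abbreviation "ch \<equiv> cosh r"
abbreviation "sh \<equiv> sinh r"

lemma sh_pos: "sh > 0" using rpos by simp
lemma ch_sq: "ch^2 = sh^2 + 1" by (rule cosh_square_eq)

lemma Ach_cv: "i < k \<Longrightarrow> Ach c (v i) = ch"
proof -
  assume i: "i < k"
  have "1 \<le> Ach c (v i)" using Ach_ge1[OF cd vd[OF i]] .
  then have "cosh (hdist c (v i)) = Ach c (v i)" by (simp add: hdist_Ach)
  then show ?thesis using vr[OF i] by simp
qed

lemma L01: "L (0,1) = g *\<^sub>R (c,1)"
  by (simp add: Lb_def)

lemma Y_snd: "i < k \<Longrightarrow> snd (Y i) = ch"
proof -
  assume i: "i < k"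
  have "mink (Y i) (0,1) = mink (Vh i) (g *\<^sub>R (c,1))" by (metis L01 mink_Vh_L)
  also have "\<dots> = g * ((v i \<bullet> c - 1) / sqrt (1 - (norm (v i))^2))"
    unfolding mink_scale_right Vh_pt mink_pair by (simp add: right_diff_distrib)
  also have "\<dots> = - Ach c (v i)"
  proof -
    have "sqrt ((1 - (norm c)^2) * (1 - (norm (v i))^2)) = sqrt (1 - (norm c)^2) * sqrt (1 - (norm (v i))^2)"
      by (simp add: real_sqrt_mult)
    then show ?thesis by (simp add: Ach_def g_def inner_commute[of c] minus_divide_left)
  qed
  finally have "mink (Y i) (0,1) = - ch" using Ach_cv[OF i] by simp
  then show ?thesis by (simp add: mink_def)
qed

lemma Vh_self: "i < k \<Longrightarrow> mink (Vh i) (Vh i) = -1"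
proof -
  assume i: "i < k"
  have q: "0 < 1 - (norm (v i))^2" using q_pos[OF vd[OF i]] .
  have "mink (Vh i) (Vh i) = (1 / sqrt (1 - (norm (v i))^2))^2 * ((norm (v i))^2 - 1)"
    unfolding Vh_def mink_scale_left mink_scale_right mink_pt_self by (simp add: power2_eq_square)
  also have "\<dots> = -1" using q by (simp add: power_divide field_simps)
  finally show ?thesis .
qed

lemma Y_self: "i < k \<Longrightarrow> mink (Y i) (Y i) = -1"
  using Vh_self by (metis LY L_mink)

definition "u i = fst (Y i) / of_real sh"

lemma fstY: "fst (Y i) = of_real sh * u i"
  using sh_pos by (simp add: u_def)

lemma Y_eq: "i < k \<Longrightarrow> Y i = (of_real sh * u i, ch)"
  using Y_snd fstY by (metis prod.collapse)

lemma u_norm: "i < k \<Longrightarrow> norm (u i) = 1"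
proof -
  assume i: "i < k"
  have "mink (Y i) (Y i) = (norm (fst (Y i)))^2 - ch^2"
    using Y_snd[OF i] by (simp add: mink_def inner_self_mult power2_eq_square)
  then have "(norm (fst (Y i)))^2 = sh^2" using Y_self[OF i] ch_sq by simp
  then have "norm (fst (Y i)) = sh" using sh_pos by (simp add: power2_eq_iff_nonneg)
  then show ?thesis using sh_pos by (simp add: u_def norm_divide)
qed

lemma mink_Y: "i < k \<Longrightarrow> mink (Y i) (n, \<beta>) = sh * (u i \<bullet> n) - ch * \<beta>"
  by (simp add: Y_eq mink_def inner_ofreal_left)

lemma mink_YY: "i < k \<Longrightarrow> j < k \<Longrightarrow> mink (Y i) (Y j) = sh^2 * (u i \<bullet> u j) - ch^2"
  by (simp add: Y_eq mink_def inner_ofreal_left inner_ofreal_right power2_eq_square)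

lemma Ach_vv: "i < k \<Longrightarrow> j < k \<Longrightarrow> Ach (v i) (v j) = - mink (Vh i) (Vh j)"
proof -
  assume i: "i < k" and j: "j < k"
  have "sqrt ((1 - (norm (v i))^2) * (1 - (norm (v j))^2)) = sqrt (1 - (norm (v i))^2) * sqrt (1 - (norm (v j))^2)"
    by (simp add: real_sqrt_mult)
  moreover have "0 < sqrt (1 - (norm (v i))^2)" "0 < sqrt (1 - (norm (v j))^2)"
    using q_pos[OF vd[OF i]] q_pos[OF vd[OF j]] by auto
  ultimately show ?thesis unfolding Ach_def Vh_def mink_scale_left mink_scale_right mink_pair
    by (simp add: field_simps)
qed

lemma u_eq: "i < k \<Longrightarrow> u i \<bullet> u (Suc i mod k) = u 0 \<bullet> u 1"
proof -
  assume i: "i < k"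
  have k0: "0 < k" "1 < k" "Suc i mod k < k" using k3 by auto
  have "Ach (v i) (v (Suc i mod k)) = Ach (v 0) (v 1)"
  proof -
    have a1: "1 \<le> Ach (v i) (v (Suc i mod k))" using Ach_ge1 vd i k0 by simp
    have a2: "1 \<le> Ach (v 0) (v 1)" using Ach_ge1 vd k0 by simp
    have "cosh (hdist (v i) (v (Suc i mod k))) = cosh (hdist (v 0) (v 1))" using veq[OF i] by simp
    then show ?thesis using a1 a2 by (simp add: hdist_Ach)
  qed
  then have "mink (Y i) (Y (Suc i mod k)) = mink (Y 0) (Y 1)"
    using Ach_vv i k0 by (metis LY L_mink neg_equal_iff_equal)
  then have "sh^2 * (u i \<bullet> u (Suc i mod k)) = sh^2 * (u 0 \<bullet> u 1)"
    using mink_YY i k0 by simp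
  then show ?thesis using sh_pos by simp
qed

lemma u_inj: "inj_on u {..<k}"
proof (rule inj_onI)
  fix i j assume i: "i \<in> {..<k}" and j: "j \<in> {..<k}" and e: "u i = u j"
  have "Y i = Y j" using Y_eq i j e by simp
  then have "L (Y i) = L (Y j)" by simp
  then have "Vh i = Vh j" unfolding LY .
  then have e1: "fst (Vh i) = fst (Vh j)" and e2: "snd (Vh i) = snd (Vh j)" by simp_all
  from e2 have s: "1 / sqrt (1 - (norm (v i))^2) = 1 / sqrt (1 - (norm (v j))^2)"
    by (simp only: Vh_def scaleR_Pair snd_conv) simp
  from e1 have f: "(1 / sqrt (1 - (norm (v i))^2)) *\<^sub>R v i = (1 / sqrt (1 - (norm (v j))^2)) *\<^sub>R v j"
    by (simp only: Vh_def scaleR_Pair fst_conv)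
  have "1 / sqrt (1 - (norm (v i))^2) \<noteq> 0" using q_pos[OF vd[of i]] i by simp
  moreover from f have "(1 / sqrt (1 - (norm (v i))^2)) *\<^sub>R v i = (1 / sqrt (1 - (norm (v i))^2)) *\<^sub>R v j"
    by (simp only: s)
  ultimately have "v i = v j" by simp
  then show "i = j" using vinj i j by (auto simp: inj_on_def)
qed

lemma u_set: "u ` {..<k} = (\<lambda>l. u 0 * cis (2 * pi * real l / real k)) ` {..<k}"
  by (rule unit_roots[OF kodd k3 u_norm u_inj u_eq])

definition "\<alpha> = Arg (u 0)"

lemma u0_cis: "u 0 = cis \<alpha>"
proof -
  have "norm (u 0) = 1" using u_norm k3 by simp
  then have "u 0 \<noteq> 0" by auto
  then show ?thesis using cis_Arg[of "u 0"] \<open>norm (u 0) = 1\<close> by (simp add: \<alpha>_def sgn_eq)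
qed

lemma vertex_angle: "i < k \<Longrightarrow> \<exists>l<k. u i = cis (\<alpha> + 2 * pi * real l / real k)"
proof -
  assume "i < k"
  then have "u i \<in> u ` {..<k}" by simp
  then obtain l where "l < k" "u i = u 0 * cis (2 * pi * real l / real k)" unfolding u_set by auto
  then show ?thesis by (auto simp: u0_cis cis_mult)
qed

lemma angle_vertex: "l < k \<Longrightarrow> \<exists>i<k. u i = cis (\<alpha> + 2 * pi * real l / real k)"
proof -
  assume "l < k"
  then have "u 0 * cis (2 * pi * real l / real k) \<in> (\<lambda>l. u 0 * cis (2 * pi * real l / real k)) ` {..<k}" by blast
  then have "u 0 * cis (2 * pi * real l / real k) \<in> u ` {..<k}" using u_set by simp
  then show ?thesis by (auto simp: u0_cis cis_mult)
qed

end



context regpoly begin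

definition "c0 = cos (pi / real k)"
definition "D0 = ch^2 - sh^2 * c0^2"
definition "T = sh * ch * (1 + c0) / sqrt D0"

lemma c0_pos: "0 < c0"
proof -
  have "pi / real k < pi / 2" using k3 pi_gt_zero by (intro divide_strict_left_mono) auto
  moreover have "0 < pi / real k" using k3 by simp
  ultimately show ?thesis unfolding c0_def by (intro cos_gt_zero_pi) auto
qed

lemma c0_le1: "c0 \<le> 1" by (simp add: c0_def)

lemma D0_ge1: "1 \<le> D0"
proof -
  have "c0^2 \<le> 1" using c0_pos c0_le1 by (simp add: power_le_one)
  then have "sh^2 * c0^2 \<le> sh^2" by (simp add: mult_left_le)
  then show ?thesis unfolding D0_def using ch_sq by simp
qed

lemma T_pos: "0 < T"
  unfolding T_def using sh_pos c0_pos D0_ge1 by (simp add: add_pos_pos)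

lemma u_inner_self: "i < k \<Longrightarrow> u i \<bullet> u i = 1"
  using u_norm by (simp add: inner_self_mult)

lemma thick_lower:
  assumes N: "mink N N > 0" and sup: "\<And>i. i < k \<Longrightarrow> mink (v i, 1) N \<le> 0"
    and i0: "i0 < k" "mink (v i0, 1) N = 0"
  shows "\<exists>w<k. T * sqrt (mink N N) \<le> fdist N (v w)"
proof -
  obtain n \<beta> where nb: "Li N = (n, \<beta>)" by fastforce
  have nn: "mink N N = (norm n)^2 - \<beta>^2"
    using Li_mink[of N N] nb by (simp add: mink_def inner_self_mult power2_eq_square)
  have G: "mink (Vh i) N = sh * (u i \<bullet> n) - ch * \<beta>" if "i < k" for i
    using that by (simp add: mink_Vh nb mink_Y)
  have Gle: "sh * (u i \<bullet> n) - ch * \<beta> \<le> 0" if i: "i < k" for i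
  proof -
    have "0 < sqrt (1 - (norm (v i))^2)" using q_pos[OF vd[OF i]] by simp
    then have "mink (Vh i) N \<le> 0" using sup[OF i] by (simp add: Vh_pt divide_nonpos_pos)
    then show ?thesis using G[OF i] by simp
  qed
  have G0: "sh * (u i0 \<bullet> n) - ch * \<beta> = 0" using G[OF i0(1)] i0(2) by (simp add: Vh_pt)
  define R where "R = norm n"
  define Mx where "Mx = u i0 \<bullet> n"
  have Rpos: "R > 0"
  proof -
    have "0 < (norm n)^2 - \<beta>^2" using N nn by simp
    then have "0 < (norm n)^2" by (metis diff_gt_0_iff_gt order.strict_trans1 zero_le_power2)
    then show ?thesis by (simp add: R_def)
  qed
  define \<psi> where "\<psi> = Arg n"
  have ncis: "n = of_real R * cis \<psi>"
  proof -
    have "n \<noteq> 0" using Rpos by (auto simp: R_def)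
    then have "cis \<psi> = n / of_real R" using cis_Arg[of n] by (simp add: \<psi>_def sgn_eq R_def)
    then show ?thesis using Rpos by (simp add: field_simps)
  qed
  have inn: "u i \<bullet> n = R * cos (\<alpha> + 2 * pi * real l / real k - \<psi>)"
    if "u i = cis (\<alpha> + 2 * pi * real l / real k)" for i l
    using that ncis by (simp add: cis_inner)
  obtain l1 l2 where l12: "l1 < k" "l2 < k"
    "c0 \<le> cos (\<alpha> + 2 * pi * real l1 / real k - \<psi>)"
    "1 + c0 \<le> cos (\<alpha> + 2 * pi * real l1 / real k - \<psi>) - cos (\<alpha> + 2 * pi * real l2 / real k - \<psi>)"
    using near_vertex[OF kodd k3, of \<alpha> \<psi>] unfolding c0_def by blast
  obtain i1 where i1: "i1 < k" "u i1 = cis (\<alpha> + 2 * pi * real l1 / real k)" using angle_vertex l12(1) by blast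
  obtain i2 where i2: "i2 < k" "u i2 = cis (\<alpha> + 2 * pi * real l2 / real k)" using angle_vertex l12(2) by blast
  have Mmax: "u i \<bullet> n \<le> Mx" if "i < k" for i
  proof -
    have "sh * (u i \<bullet> n) \<le> sh * (u i0 \<bullet> n)" using Gle[OF that] G0 by simp
    then show ?thesis unfolding Mx_def by (rule mult_le_cancel_left_pos[THEN iffD1, OF sh_pos])
  qed
  have RM: "R * c0 \<le> Mx"
  proof -
    have "R * c0 \<le> R * cos (\<alpha> + 2 * pi * real l1 / real k - \<psi>)" using l12(3) Rpos by simp
    also have "\<dots> = u i1 \<bullet> n" using inn[OF i1(2)] by simp
    also have "\<dots> \<le> Mx" using Mmax[OF i1(1)] .
    finally show ?thesis .
  qed
  have b: "ch * \<beta> = sh * Mx" using G0 by (simp add: Mx_def)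
  have fd: "sh * R * (1 + c0) \<le> fdist N (v i2)"
  proof -
    have "fdist N (v i2) = sh * Mx - sh * (u i2 \<bullet> n)" using G[OF i2(1)] b by (simp add: fdist_Vh)
    also have "\<dots> = sh * (Mx - u i2 \<bullet> n)" by (simp add: algebra_simps)
    finally have e: "fdist N (v i2) = sh * (Mx - u i2 \<bullet> n)" .
    have "R * (1 + c0) \<le> R * (cos (\<alpha> + 2 * pi * real l1 / real k - \<psi>) - cos (\<alpha> + 2 * pi * real l2 / real k - \<psi>))"
      using l12(4) Rpos by simp
    also have "\<dots> = u i1 \<bullet> n - u i2 \<bullet> n" using inn[OF i1(2)] inn[OF i2(2)] by (simp add: algebra_simps)
    also have "\<dots> \<le> Mx - u i2 \<bullet> n" using Mmax[OF i1(1)] by simp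
    finally have "R * (1 + c0) \<le> Mx - u i2 \<bullet> n" .
    then have "sh * (R * (1 + c0)) \<le> sh * (Mx - u i2 \<bullet> n)" using sh_pos by simp
    then show ?thesis using e by (simp add: algebra_simps)
  qed
  have D0p: "0 < D0" using D0_ge1 by simp
  have key: "ch^2 * mink N N \<le> R^2 * D0"
  proof -
    have e1: "ch^2 * \<beta>^2 = sh^2 * Mx^2" using b by (metis power_mult_distrib)
    have "(R * c0)^2 \<le> Mx^2" using RM Rpos c0_pos by (intro power_mono) auto
    then have e2: "sh^2 * (R^2 * c0^2) \<le> sh^2 * Mx^2" by (simp add: power_mult_distrib mult_left_mono)
    have "ch^2 * mink N N = ch^2 * R^2 - sh^2 * Mx^2" using e1 by (simp add: nn R_def algebra_simps)
    also have "\<dots> \<le> ch^2 * R^2 - sh^2 * (R^2 * c0^2)" using e2 by simp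
    also have "\<dots> = R^2 * D0" by (simp add: D0_def algebra_simps)
    finally show ?thesis .
  qed
  have T2: "T^2 = sh^2 * (1 + c0)^2 / D0 * ch^2"
    using D0p by (simp add: T_def power_divide power_mult_distrib)
  have "(T * sqrt (mink N N))^2 = sh^2 * (1 + c0)^2 / D0 * (ch^2 * mink N N)"
    using N by (simp add: power_mult_distrib T2 algebra_simps)
  also have "\<dots> \<le> sh^2 * (1 + c0)^2 / D0 * (R^2 * D0)"
    using key D0p by (intro mult_left_mono) auto
  also have "\<dots> = (sh * R * (1 + c0))^2" using D0p by (simp add: power_mult_distrib)
  finally have sq: "(T * sqrt (mink N N))^2 \<le> (sh * R * (1 + c0))^2" .
  have nnR: "0 \<le> sh * R * (1 + c0)" using sh_pos Rpos c0_pos by simp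
  have "T * sqrt (mink N N) \<le> sh * R * (1 + c0)"
    by (rule power2_le_imp_le[OF sq nnR])
  then show ?thesis using fd i2(1) by (intro exI[of _ i2]) auto
qed

lemma u_inner_cos: "i < k \<Longrightarrow> j < k \<Longrightarrow> \<exists>L<k. u i \<bullet> u j = cos (2 * pi * real L / real k)"
proof -
  assume i: "i < k" and j: "j < k"
  obtain li where li: "li < k" "u i = cis (\<alpha> + 2 * pi * real li / real k)" using vertex_angle[OF i] by blast
  obtain lj where lj: "lj < k" "u j = cis (\<alpha> + 2 * pi * real lj / real k)" using vertex_angle[OF j] by blast
  have k0: "k > 0" using k3 by simp
  have "u i \<bullet> u j = cos (2 * pi * real li / real k - 2 * pi * real lj / real k)"
    using li lj by (simp add: cis_inner2)
  also have "\<dots> = cos (0 + 2 * pi * of_int (int li - int lj) / real k - 0)"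
    using k0 by (simp add: field_simps)
  also have "\<dots> = cos (0 + 2 * pi * real (nat ((int li - int lj) mod int k)) / real k - 0)"
    by (rule cos_mod_k[OF k0])
  finally show ?thesis using k0 by (intro exI[of _ "nat ((int li - int lj) mod int k)"]) (auto simp: nat_less_iff)
qed

lemma side_line:
  assumes j: "j < k"
  shows "\<exists>N0. mink N0 N0 = 1 \<and> (\<forall>i<k. 0 \<le> fdist N0 (v i)) \<and> (\<exists>i<k. fdist N0 (v i) = 0) \<and>
     fdist N0 (v j) = T \<and> (\<forall>i<k. v i \<noteq> v j \<longrightarrow> fdist N0 (v i) < T)"
proof -
  have D0p: "0 < D0" using D0_ge1 by simp
  define R0 where "R0 = ch / sqrt D0"
  define \<beta>0 where "\<beta>0 = sh * c0 / sqrt D0"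
  define n0 where "n0 = - (of_real R0 * u j)"
  define N0 where "N0 = L (n0, \<beta>0)"
  have R0p: "R0 > 0" unfolding R0_def using D0p by simp
  have fd: "fdist N0 (v i) = sh * R0 * (u i \<bullet> u j + c0)" if i: "i < k" for i
  proof -
    have "fdist N0 (v i) = - mink (Y i) (n0, \<beta>0)" by (simp add: fdist_Vh N0_def mink_Vh_L)
    also have "\<dots> = - (sh * (u i \<bullet> n0) - ch * \<beta>0)" using mink_Y[OF i] by simp
    also have "u i \<bullet> n0 = - R0 * (u i \<bullet> u j)" by (simp add: n0_def inner_ofreal_right)
    also have "ch * \<beta>0 = sh * R0 * c0" by (simp add: \<beta>0_def R0_def)
    finally show ?thesis by (simp add: algebra_simps)
  qed
  have "mink N0 N0 = mink (n0, \<beta>0) (n0, \<beta>0)" by (simp add: N0_def L_mink)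
  also have "\<dots> = R0^2 - \<beta>0^2"
    using u_norm[OF j] R0p by (simp add: mink_def n0_def inner_self_mult power2_eq_square norm_mult)
  also have "\<dots> = (ch^2 - sh^2 * c0^2) / D0" using D0p
    by (simp add: R0_def \<beta>0_def power_divide power_mult_distrib diff_divide_distrib)
  also have "\<dots> = 1" using D0p by (simp add: D0_def)
  finally have nn: "mink N0 N0 = 1" .
  have nonneg: "\<forall>i<k. 0 \<le> fdist N0 (v i)"
  proof (intro allI impI)
    fix i assume i: "i < k"
    obtain L where L: "L < k" "u i \<bullet> u j = cos (2 * pi * real L / real k)" using u_inner_cos[OF i j] by blast
    have "- cos (2 * pi * real L / real k) \<le> c0" using opposite_vertex[OF kodd k3 L(1)] by (simp add: c0_def)
    then have "0 \<le> u i \<bullet> u j + c0" using L(2) by simp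
    then show "0 \<le> fdist N0 (v i)" using fd[OF i] sh_pos R0p by simp
  qed
  have zero: "\<exists>i<k. fdist N0 (v i) = 0"
  proof -
    obtain lj where lj: "lj < k" "u j = cis (\<alpha> + 2 * pi * real lj / real k)" using vertex_angle[OF j] by blast
    define h where "h = (k - 1) div 2"
    have k0: "k > 0" using k3 by simp
    define Lz where "Lz = nat ((int lj + int h) mod int k)"
    have Lz: "Lz < k" using k0 by (simp add: Lz_def nat_less_iff)
    obtain i where i: "i < k" "u i = cis (\<alpha> + 2 * pi * real Lz / real k)" using angle_vertex[OF Lz] by blast
    have "u i \<bullet> u j = cos (0 + 2 * pi * real Lz / real k - 2 * pi * real lj / real k)"
      using i lj by (simp add: cis_inner2)
    also have "\<dots> = cos (0 + 2 * pi * of_int (int lj + int h) / real k - 2 * pi * real lj / real k)"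
      unfolding Lz_def by (rule cos_mod_k[OF k0, symmetric])
    also have "\<dots> = cos (2 * pi * real h / real k)" using k0 by (simp add: field_simps)
    also have "\<dots> = - c0" using opposite_vertex_eq[OF kodd k3] by (simp add: h_def c0_def)
    finally show ?thesis using fd[OF i(1)] i(1) by auto
  qed
  have fj: "fdist N0 (v j) = T"
    using fd[OF j] u_inner_self[OF j] D0p by (simp add: T_def R0_def algebra_simps)
  have lt: "\<forall>i<k. v i \<noteq> v j \<longrightarrow> fdist N0 (v i) < T"
  proof (intro allI impI)
    fix i assume i: "i < k" and vij: "v i \<noteq> v j"
    then have "i \<noteq> j" by auto
    then have "u i \<noteq> u j" using u_inj i j by (auto simp: inj_on_def)
    then have "0 < (norm (u i - u j))^2" by simp
    also have "(norm (u i - u j))^2 = 2 - 2 * (u i \<bullet> u j)"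
      using u_inner_self[OF i] u_inner_self[OF j] inner_commute[of "u j" "u i"]
      by (simp add: power2_norm_eq_inner inner_diff_left inner_diff_right)
    finally have "u i \<bullet> u j < 1" by simp
    then have "sh * R0 * (u i \<bullet> u j + c0) < sh * R0 * (1 + c0)" using sh_pos R0p by simp
    moreover have "sh * R0 * (1 + c0) = T" by (simp add: T_def R0_def)
    ultimately show "fdist N0 (v i) < T" using fd[OF i] by simp
  qed
  show ?thesis using nn nonneg zero fj lt by blast
qed

end



lemma hdisk_ball: "hdisk = ball 0 1"
  by (auto simp: hdisk_def)

lemma convex_hdisk: "convex hdisk"
  by (simp add: hdisk_ball)

lemma hull_sub_disk: "V \<subseteq> hdisk \<Longrightarrow> convex hull V \<subseteq> hdisk"
  by (rule hull_minimal) (auto simp: convex_hdisk)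

lemma halfspace_hull:
  assumes "\<And>x. x \<in> V \<Longrightarrow> x \<bullet> a \<le> b"
  shows "convex hull V \<subseteq> {x. x \<bullet> a \<le> b}"
proof (rule hull_minimal)
  show "V \<subseteq> {x. x \<bullet> a \<le> b}" using assms by auto
  have "convex {x. a \<bullet> x \<le> b}" by (rule convex_halfspace_le)
  then show "convex {x. x \<bullet> a \<le> b}" by (simp add: inner_commute)
qed

lemma halfspace_hull_lt:
  assumes "\<And>x. x \<in> V \<Longrightarrow> x \<bullet> a < b"
  shows "convex hull V \<subseteq> {x. x \<bullet> a < b}"
proof (rule hull_minimal)
  show "V \<subseteq> {x. x \<bullet> a < b}" using assms by auto
  have "convex {x. a \<bullet> x < b}" by (rule convex_halfspace_lt)
  then show "convex {x. x \<bullet> a < b}" by (simp add: inner_commute)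
qed

lemma fdist_nonneg_iff:
  "norm x < 1 \<Longrightarrow> 0 \<le> fdist N x \<longleftrightarrow> mink (x,1) N \<le> 0"
proof -
  assume x: "norm x < 1"
  have "0 < sqrt (1 - (norm x)^2)" using q_pos[OF x] by simp
  then show ?thesis by (simp add: fdist_def zero_le_divide_iff divide_le_0_iff)
qed

lemma sqrt_ge1: "1 \<le> sqrt (1 + t^2)"
  by simp

lemma width_lower_gen:
  assumes P: "P = convex hull V" "finite V" "V \<subseteq> hdisk" "convex_body P"
    and H: "supports H P" and T: "T > 0"
    and vert: "\<And>a b. valid_line a b \<Longrightarrow> H = hline a b \<Longrightarrow> (\<forall>x\<in>P. mink (x,1) (a,b) \<le> 0) \<Longrightarrow>
        \<exists>w\<in>V. T * sqrt (mink (a,b) (a,b)) \<le> fdist (a,b) w"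
  shows "arcosh (sqrt (1 + T^2)) \<le> hwidth H P"
proof -
  obtain a b where ab: "valid_line a b" "H = hline a b" "\<And>x. x \<in> P \<Longrightarrow> mink (x,1) (a,b) \<le> 0" "H \<inter> P \<noteq> {}"
    using supports_unfold[OF H] by blast
  define N where "N = (a,b)"
  have N: "mink N N > 0" using mink_of_valid[OF ab(1)] by (simp add: N_def)
  obtain w0 where w0: "w0 \<in> V" "T * sqrt (mink N N) \<le> fdist N w0"
    using vert[OF ab(1) ab(2)] ab(3) by (auto simp: N_def)
  have Vne: "V \<noteq> {}" using w0 by auto
  define m where "m = Max (fdist N ` V)"
  have "m \<in> fdist N ` V" unfolding m_def using P(2) Vne by (intro Max_in) auto
  then obtain w where w: "w \<in> V" "fdist N w = m" by auto
  have wmax: "\<And>x. x \<in> V \<Longrightarrow> fdist N x \<le> fdist N w" using P(2) w by (auto simp: m_def)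
  have wd: "norm w < 1" using w P(3) by (auto simp: hdisk_def)
  have fwT: "T * sqrt (mink N N) \<le> fdist N w" using w0 wmax[OF w0(1)] by simp
  have fw: "fdist N w > 0" using fwT T N by (smt (verit) mult_pos_pos real_sqrt_gt_0_iff)
  define N' where "N' = (fdist N w / sqrt (1 - (norm w)^2)) *\<^sub>R (w,1) - N"
  note cl = constr_line[OF N wd fw, folded N'_def]
  define a' where "a' = fst N'"
  define b' where "b' = snd N'"
  have N'eq: "N' = (a',b')" by (simp add: a'_def b'_def)
  have v': "valid_line a' b'" using cl(1) N by (intro valid_of_mink) (simp add: N'eq[symmetric] add_nonneg_pos)
  have wP: "w \<in> P" using w P(1) by (simp add: hull_inc)
  have sup': "supports (hline a' b') P"
    unfolding supports_def
  proof (intro exI conjI)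
    show "valid_line a' b'" by fact
    show "P \<subseteq> {x. x \<bullet> a' \<le> b'}" unfolding P(1)
    proof (rule halfspace_hull)
      fix x assume x: "x \<in> V"
      have "mink (x,1) N' \<le> 0" using cl(3)[of x] x wmax P(3) by (auto simp: hdisk_def)
      then show "x \<bullet> a' \<le> b'" by (simp add: N'eq mink_line)
    qed
    show "hline a' b' \<inter> P \<noteq> {}" using cl(2) wP wd by (auto simp: hline_def N'eq mink_line)
  qed simp
  have up: "ultraparallel H (hline a' b')"
    unfolding ultraparallel_def
  proof (intro exI conjI)
    show "valid_line a b" "valid_line a' b'" "H = hline a b" by (fact ab(1), fact v', fact ab(2))
    show "\<not> (\<exists>x. norm x \<le> 1 \<and> x \<bullet> a = b \<and> x \<bullet> a' = b')"
      using cl(4) by (auto simp: N'eq N_def mink_line)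
  qed simp
  have dist: "arcosh (sqrt (1 + T^2)) \<le> hsetdist H (hline a' b')"
  proof (rule hsetdist_ge)
    show "H \<noteq> {}" using ab(4) by auto
    show "hline a' b' \<noteq> {}" using cl(2) wd by (auto simp: hline_def N'eq mink_line)
    fix x y assume x: "x \<in> H" and y: "y \<in> hline a' b'"
    have xd: "norm x < 1" and xN: "mink (x,1) N = 0" using x ab(2) by (auto simp: hline_def N_def mink_line)
    have yd: "norm y < 1" and yN: "mink (y,1) N' = 0" using y by (auto simp: hline_def N'eq mink_line)
    have qy: "0 < 1 - (norm y)^2" using q_pos[OF yd] .
    have l1: "1 + (mink (y,1) N)^2 / ((1 - (norm y)\<^sup>2) * mink N N) \<le> (Ach x y)^2"
      by (rule dist_line_lower[OF xd yd xN N])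
    have l2: "(fdist N w)^2 * (1 - (norm y)^2) \<le> (mink (y,1) N)^2" by (rule cl(5)[OF yd yN])
    have "T^2 * mink N N \<le> (fdist N w)^2"
    proof -
      have "(T * sqrt (mink N N))^2 \<le> (fdist N w)^2"
        using fwT T N by (intro power_mono) auto
      then show ?thesis using N by (simp add: power_mult_distrib)
    qed
    then have "T^2 \<le> (fdist N w)^2 / mink N N" using N by (simp add: le_divide_eq)
    also have "\<dots> = ((fdist N w)^2 * (1 - (norm y)^2)) / ((1 - (norm y)\<^sup>2) * mink N N)"
      using qy by simp
    also have "\<dots> \<le> (mink (y,1) N)^2 / ((1 - (norm y)\<^sup>2) * mink N N)"
      using l2 qy N by (intro divide_right_mono) auto
    finally have "1 + T^2 \<le> (Ach x y)^2" using l1 by simp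
    then have "sqrt (1 + T^2) \<le> Ach x y"
      using Ach_pos[OF xd yd] by (metis abs_of_pos real_sqrt_abs real_sqrt_le_mono)
    then show "arcosh (sqrt (1 + T^2)) \<le> hdist x y"
      unfolding hdist_Ach by (intro arcosh_mono_le) auto
  qed
  have mem: "hsetdist H (hline a' b') \<in> wset H P" using sup' up by (auto simp: wset_def)
  show ?thesis unfolding hwidth_wset
    using wset_props(2)[OF P(4) H] mem dist by (intro cSup_upper2) auto
qed



lemma mink_expand2: "mink (N - r *\<^sub>R W) (N - r *\<^sub>R W) = mink N N - 2 * r * mink W N + r^2 * mink W W"
  by (simp add: mink_simps mink_comm[of N W] power2_eq_square algebra_simps)

lemma mink_comb: "mink ((1 - t) *\<^sub>R x + t *\<^sub>R y, 1) N = (1 - t) * mink (x,1) N + t * mink (y,1) N"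
  by (simp add: mink_def inner_add_left algebra_simps)

lemma sqrt_concave:
  fixes x y :: complex and t :: real
  assumes x: "norm x < 1" and y: "norm y < 1" and t: "0 \<le> t" "t \<le> 1"
  defines "z \<equiv> (1 - t) *\<^sub>R x + t *\<^sub>R y"
  shows "(1 - t) * sqrt (1 - (norm x)^2) + t * sqrt (1 - (norm y)^2) \<le> sqrt (1 - (norm z)^2)"
proof -
  have xm: "x \<in> hdisk" and ym: "y \<in> hdisk" using x y by (simp_all add: hdisk_def)
  have "z \<in> hdisk" unfolding z_def by (rule convexD[OF convex_hdisk xm ym]) (use t in auto)
  then have zd: "norm z < 1" by (simp add: hdisk_def)
  define sz where "sz = sqrt (1 - (norm z)^2)"
  define sx where "sx = sqrt (1 - (norm x)^2)"
  define sy where "sy = sqrt (1 - (norm y)^2)"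
  have szp: "sz > 0" using q_pos[OF zd] by (simp add: sz_def)
  have sxp: "sx \<ge> 0" "sy \<ge> 0" using q_pos[OF x] q_pos[OF y] by (simp_all add: sx_def sy_def)
  have ex: "sx * sz \<le> 1 - x \<bullet> z"
  proof -
    have e: "1 - x \<bullet> z = Ach x z * (sx * sz)" using one_minus_inner_eq[OF x zd] by (simp add: sx_def sz_def mult.assoc)
    have "1 * (sx * sz) \<le> Ach x z * (sx * sz)"
      using Ach_ge1[OF x zd] sxp szp by (intro mult_right_mono) auto
    then show ?thesis using e by simp
  qed
  have ey: "sy * sz \<le> 1 - y \<bullet> z"
  proof -
    have e: "1 - y \<bullet> z = Ach y z * (sy * sz)" using one_minus_inner_eq[OF y zd] by (simp add: sy_def sz_def mult.assoc)
    have "1 * (sy * sz) \<le> Ach y z * (sy * sz)"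
      using Ach_ge1[OF y zd] sxp szp by (intro mult_right_mono) auto
    then show ?thesis using e by simp
  qed
  have zz: "1 - (norm z)^2 = (1 - t) * (1 - x \<bullet> z) + t * (1 - y \<bullet> z)"
  proof -
    have "(norm z)^2 = z \<bullet> z" by (simp add: power2_norm_eq_inner)
    also have "z \<bullet> z = (1 - t) * (x \<bullet> z) + t * (y \<bullet> z)" by (simp add: z_def inner_add_left)
    finally show ?thesis by (simp add: algebra_simps)
  qed
  have "sz * ((1 - t) * sx + t * sy) = (1 - t) * (sx * sz) + t * (sy * sz)" by (simp add: algebra_simps)
  also have "\<dots> \<le> (1 - t) * (1 - x \<bullet> z) + t * (1 - y \<bullet> z)"
    using ex ey t by (intro add_mono mult_left_mono) auto
  also have "\<dots> = sz * sz" using zz q_pos[OF zd] by (simp add: sz_def)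
  finally have "sz * ((1 - t) * sx + t * sy) \<le> sz * sz" .
  then have "(1 - t) * sx + t * sy \<le> sz" using szp by simp
  then show ?thesis by (simp add: sx_def sy_def sz_def)
qed

lemma convF:
  fixes T :: real
  assumes T: "T \<ge> 0"
  shows "convex_on hdisk (\<lambda>x. - mink (x,1) N - T * sqrt (1 - (norm x)^2))"
proof (rule convex_onI)
  show "convex hdisk" by (rule convex_hdisk)
  fix t :: real and x y assume t: "0 < t" "t < 1" and x: "x \<in> hdisk" and y: "y \<in> hdisk"
  have xd: "norm x < 1" and yd: "norm y < 1" using x y by (auto simp: hdisk_def)
  have c: "(1 - t) * sqrt (1 - (norm x)^2) + t * sqrt (1 - (norm y)^2) \<le> sqrt (1 - (norm ((1 - t) *\<^sub>R x + t *\<^sub>R y))^2)"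
    using sqrt_concave[OF xd yd, of t] t by simp
  have "T * ((1 - t) * sqrt (1 - (norm x)^2) + t * sqrt (1 - (norm y)^2)) \<le> T * sqrt (1 - (norm ((1 - t) *\<^sub>R x + t *\<^sub>R y))^2)"
    using c T by (rule mult_left_mono)
  then show "- mink ((1 - t) *\<^sub>R x + t *\<^sub>R y, 1) N - T * sqrt (1 - (norm ((1 - t) *\<^sub>R x + t *\<^sub>R y))^2)
      \<le> (1 - t) * (- mink (x, 1) N - T * sqrt (1 - (norm x)^2)) + t * (- mink (y, 1) N - T * sqrt (1 - (norm y)^2))"
    unfolding mink_comb by (simp add: algebra_simps)
qed

lemma fdist_lt_iff:
  "norm x < 1 \<Longrightarrow> fdist N x < T \<longleftrightarrow> - mink (x,1) N - T * sqrt (1 - (norm x)^2) < 0"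
proof -
  assume x: "norm x < 1"
  have s: "0 < sqrt (1 - (norm x)^2)" using q_pos[OF x] by simp
  have "fdist N x < T \<longleftrightarrow> (- mink (x,1) N) / sqrt (1 - (norm x)^2) < T" by (simp add: fdist_def)
  also have "\<dots> \<longleftrightarrow> - mink (x,1) N < T * sqrt (1 - (norm x)^2)" by (rule pos_divide_less_eq[OF s])
  finally show ?thesis by simp
qed

lemma fdist_eq_iff:
  "norm x < 1 \<Longrightarrow> fdist N x = T \<longleftrightarrow> - mink (x,1) N - T * sqrt (1 - (norm x)^2) = 0"
proof -
  assume x: "norm x < 1"
  have s: "sqrt (1 - (norm x)^2) \<noteq> 0" using q_pos[OF x] by simp
  have "fdist N x = T \<longleftrightarrow> (- mink (x,1) N) / sqrt (1 - (norm x)^2) = T" by (simp add: fdist_def)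
  also have "\<dots> \<longleftrightarrow> - mink (x,1) N = T * sqrt (1 - (norm x)^2)" by (rule nonzero_divide_eq_eq[OF s])
  finally show ?thesis by simp
qed

lemma strict_on_hull:
  assumes P: "P = convex hull V" "finite V" "V \<subseteq> hdisk" and vj: "vj \<in> V"
    and N0: "fdist N0 vj = T" "\<forall>x\<in>V. x \<noteq> vj \<longrightarrow> fdist N0 x < T" and T: "T \<ge> 0"
  shows "\<forall>x\<in>P. x \<noteq> vj \<longrightarrow> fdist N0 x < T"
proof (intro ballI impI)
  fix x assume xP: "x \<in> P" and xv: "x \<noteq> vj"
  define F where "F x = - mink (x,1) N0 - T * sqrt (1 - (norm x)^2)" for x
  have cF: "convex_on hdisk F" unfolding F_def by (rule convF[OF T])
  have Pd: "P \<subseteq> hdisk" using P hull_sub_disk by simp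
  have xd: "norm x < 1" using xP Pd by (auto simp: hdisk_def)
  have vjd: "norm vj < 1" using vj P(3) by (auto simp: hdisk_def)
  have Fvj: "F vj = 0" using N0(1) fdist_eq_iff[OF vjd] by (simp add: F_def)
  define V' where "V' = V - {vj}"
  show "fdist N0 x < T"
  proof (cases "V' = {}")
    case True
    then have "V = {vj}" using vj by (auto simp: V'_def)
    then have "P = {vj}" using P(1) by simp
    then show ?thesis using xP xv by simp
  next
    case False
    have VV: "V = insert vj V'" using vj by (auto simp: V'_def)
    have fin: "finite V'" using P(2) by (simp add: V'_def)
    have V'd: "V' \<subseteq> hdisk" using P(3) by (auto simp: V'_def)
    define mm where "mm = Max (F ` V')"
    have mmin: "mm \<in> F ` V'" unfolding mm_def using fin False by (intro Max_in) auto
    have mmneg: "mm < 0"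
    proof -
      obtain y where y: "y \<in> V'" "F y = mm" using mmin by auto
      have yd: "norm y < 1" using y V'd by (auto simp: hdisk_def)
      have "fdist N0 y < T" using N0(2) y by (auto simp: V'_def)
      then show ?thesis using fdist_lt_iff[OF yd] y by (simp add: F_def)
    qed
    have bound: "\<forall>y\<in>convex hull V'. F y \<le> mm"
    proof (rule convex_on_convex_hull_bound)
      show "convex_on (convex hull V') F"
        using cF hull_sub_disk[OF V'd] by (rule convex_on_subset) simp
      show "\<forall>x\<in>V'. F x \<le> mm" using fin by (auto simp: mm_def)
    qed
    from xP have "x \<in> convex hull (insert vj V')" using P(1) VV by simp
    then obtain u w bb where uw: "0 \<le> u" "0 \<le> w" "u + w = 1" "bb \<in> convex hull V'" "x = u *\<^sub>R vj + w *\<^sub>R bb"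
      using convex_hull_insert[OF False] by auto
    have bbd: "bb \<in> hdisk" using uw(4) hull_sub_disk[OF V'd] by auto
    have w0: "w \<noteq> 0"
    proof
      assume "w = 0"
      then have "x = vj" using uw by simp
      then show False using xv by simp
    qed
    have ue: "u = 1 - w" using uw(3) by simp
    have xe: "x = (1 - w) *\<^sub>R vj + w *\<^sub>R bb" using uw ue by simp
    have vjm: "vj \<in> hdisk" using vj P(3) by auto
    have w1: "w \<le> 1" using uw by simp
    have "F ((1 - w) *\<^sub>R vj + w *\<^sub>R bb) \<le> (1 - w) * F vj + w * F bb"
      by (rule convex_onD[OF cF uw(2) w1 vjm bbd])
    then have "F x \<le> (1 - w) * F vj + w * F bb" by (simp only: xe)
    also have "\<dots> = w * F bb" using Fvj by simp
    also have "\<dots> \<le> w * mm" using bound uw by (intro mult_left_mono) auto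
    also have "\<dots> < 0" using mmneg uw w0 by (simp add: mult_pos_neg)
    finally show ?thesis using fdist_lt_iff[OF xd] by (simp add: F_def)
  qed
qed



lemma nonneg_on_hull:
  assumes P: "P = convex hull V" "V \<subseteq> hdisk" and N0: "\<forall>x\<in>V. 0 \<le> fdist N0 x"
  shows "\<forall>x\<in>P. 0 \<le> fdist N0 x"
proof -
  have "P \<subseteq> {x. x \<bullet> fst N0 \<le> snd N0}" unfolding P(1)
  proof (rule halfspace_hull)
    fix x assume x: "x \<in> V"
    have xd: "norm x < 1" using x P(2) by (auto simp: hdisk_def)
    have "0 \<le> fdist N0 x" using N0 x by auto
    then have "mink (x,1) N0 \<le> 0" using fdist_nonneg_iff[OF xd, of N0] by simp
    then show "x \<bullet> fst N0 \<le> snd N0" by (simp add: mink_def)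
  qed
  moreover have "P \<subseteq> hdisk" using P hull_sub_disk by simp
  ultimately show ?thesis
  proof (intro ballI)
    fix x assume h: "P \<subseteq> {x. x \<bullet> fst N0 \<le> snd N0}" "P \<subseteq> hdisk" and x: "x \<in> P"
    have xd: "norm x < 1" using h(2) x by (auto simp: hdisk_def)
    have "mink (x,1) N0 \<le> 0" using h(1) x by (auto simp: mink_def)
    then show "0 \<le> fdist N0 x" using fdist_nonneg_iff[OF xd, of N0] by simp
  qed
qed

lemma thick_upper_gen:
  assumes P: "P = convex hull V" "finite V" "V \<subseteq> hdisk"
    and Z: "convex_body Z" "Z \<subseteq> P" and vj: "vj \<in> V" "vj \<notin> Z"
    and N0: "mink N0 N0 = 1" "\<forall>x\<in>V. 0 \<le> fdist N0 x" "fdist N0 vj = T" "\<forall>x\<in>V. x \<noteq> vj \<longrightarrow> fdist N0 x < T"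
    and T: "T > 0"
  shows "\<exists>H. supports H Z \<and> hwidth H Z < arcosh (sqrt (1 + T^2))"
proof -
  have Pd: "P \<subseteq> hdisk" using P hull_sub_disk by simp
  have Zd: "Z \<subseteq> hdisk" and Zc: "compact Z" and Zi: "interior Z \<noteq> {}"
    using Z by (auto simp: convex_body_def)
  have Zne: "Z \<noteq> {}" using Zi by auto
  have vjd: "norm vj < 1" using vj P(3) by (auto simp: hdisk_def)
  have nonneg: "\<forall>x\<in>P. 0 \<le> fdist N0 x" by (rule nonneg_on_hull[OF P(1) P(3) N0(2)])
  have strict: "\<forall>x\<in>P. x \<noteq> vj \<longrightarrow> fdist N0 x < T"
    by (rule strict_on_hull[OF P vj(1) N0(3) N0(4)]) (use T in simp)
  have zlt: "\<And>z. z \<in> Z \<Longrightarrow> fdist N0 z < T" using strict Z(2) vj(2) by auto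
  have znn: "\<And>z. z \<in> Z \<Longrightarrow> 0 \<le> fdist N0 z" using nonneg Z(2) by auto
  have zd: "\<And>z. z \<in> Z \<Longrightarrow> norm z < 1" using Zd by (auto simp: hdisk_def)
  have Apos: "\<And>z. z \<in> Z \<Longrightarrow> 0 < Ach z vj" using Ach_pos zd vjd by blast
  have nz: "\<forall>x\<in>Z. sqrt (1 - (norm x)^2) \<noteq> 0"
  proof
    fix x assume "x \<in> Z"
    then show "sqrt (1 - (norm x)^2) \<noteq> 0" using q_pos[of x] zd by simp
  qed
  have nz2: "\<forall>x\<in>Z. sqrt ((1 - (norm x)^2) * (1 - (norm vj)^2)) \<noteq> 0"
  proof
    fix x assume "x \<in> Z"
    then show "sqrt ((1 - (norm x)^2) * (1 - (norm vj)^2)) \<noteq> 0" using q_pos[of x] q_pos[OF vjd] zd by simp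
  qed
  have feq: "fdist N0 = (\<lambda>x. - (x \<bullet> fst N0 - snd N0) / sqrt (1 - (norm x)^2))"
    by (auto simp: fdist_def mink_def fun_eq_iff)
  have contf: "continuous_on Z (fdist N0)"
    unfolding feq using nz by (intro continuous_intros) auto
  have contA: "continuous_on Z (\<lambda>x. Ach x vj)"
    unfolding Ach_def using nz2 by (intro continuous_intros) auto
  have conth: "continuous_on Z (\<lambda>x. fdist N0 x / Ach x vj)"
    using contf contA Apos by (intro continuous_intros) (auto simp: less_imp_neq[symmetric])
  obtain zs where zs: "zs \<in> Z" "\<And>z. z \<in> Z \<Longrightarrow> fdist N0 zs / Ach zs vj \<le> fdist N0 z / Ach z vj"
    using continuous_attains_inf[OF Zc Zne conth] by blast
  obtain p0 where p0: "p0 \<in> Z" "\<And>z. z \<in> Z \<Longrightarrow> fdist N0 z \<le> fdist N0 p0"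
    using continuous_attains_sup[OF Zc Zne contf] by blast
  define T' where "T' = fdist N0 p0"
  have T'lt: "T' < T" using zlt[OF p0(1)] by (simp add: T'_def)
  have T'nn: "0 \<le> T'" using znn[OF p0(1)] by (simp add: T'_def)
  define lam where "lam = fdist N0 zs / Ach zs vj"
  have lnn: "0 \<le> lam" using znn[OF zs(1)] Apos[OF zs(1)] by (simp add: lam_def)
  have lT: "lam \<le> T"
  proof -
    have A1: "1 \<le> Ach zs vj" using Ach_ge1[OF zd[OF zs(1)] vjd] .
    have "fdist N0 zs * 1 \<le> fdist N0 zs * Ach zs vj" by (rule mult_left_mono[OF A1 znn[OF zs(1)]])
    then have "lam \<le> fdist N0 zs" unfolding lam_def using A1 by (simp add: divide_le_eq)
    then show ?thesis using zlt[OF zs(1)] by simp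
  qed
  define sv where "sv = sqrt (1 - (norm vj)^2)"
  have svp: "sv > 0" using q_pos[OF vjd] by (simp add: sv_def)
  define N where "N = N0 - (lam / sv) *\<^sub>R (vj, 1)"
  have formula: "mink (x,1) N = sqrt (1 - (norm x)^2) * (lam * Ach x vj - fdist N0 x)" if x: "norm x < 1" for x
  proof -
    define sx where "sx = sqrt (1 - (norm x)^2)"
    have sxp: "sx > 0" using q_pos[OF x] by (simp add: sx_def)
    have e1: "mink (x,1) N0 = - fdist N0 x * sx" using sxp by (simp add: fdist_def sx_def)
    have e2: "1 - x \<bullet> vj = Ach x vj * sx * sv" using one_minus_inner_eq[OF x vjd] by (simp add: sx_def sv_def)
    have "mink (x,1) N = mink (x,1) N0 - (lam / sv) * (x \<bullet> vj - 1)"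
      using svp by (simp add: N_def mink_simps mink_pair field_simps)
    also have "(lam / sv) * (x \<bullet> vj - 1) = - (lam / sv) * (1 - x \<bullet> vj)" by (simp add: algebra_simps)
    also have "\<dots> = - lam * Ach x vj * sx" unfolding e2 using svp by simp
    finally show ?thesis unfolding e1 by (simp add: sx_def algebra_simps)
  qed
  have nnN: "mink N N = 1 + 2 * lam * T - lam^2"
  proof -
    have "- mink (vj,1) N0 - T * sv = 0" using fdist_eq_iff[OF vjd, of N0 T] N0(3) by (simp add: sv_def)
    then have m1: "mink (vj,1) N0 = - T * sv" by simp
    have m2: "mink (vj,1) (vj,1) = - (sv * sv)" using q_pos[OF vjd] by (simp add: mink_pt_self sv_def)
    show ?thesis unfolding N_def mink_expand2 m1 m2 N0(1) using svp by (simp add: power2_eq_square field_simps)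
  qed
  have nn1: "1 \<le> mink N N"
  proof -
    have "0 \<le> lam * (2 * T - lam)" using lnn lT by simp
    then show ?thesis unfolding nnN by (simp add: algebra_simps power2_eq_square)
  qed
  have Npos: "mink N N > 0" using nn1 by simp
  define a where "a = fst N"
  define b where "b = snd N"
  have Nab: "N = (a,b)" by (simp add: a_def b_def)
  have vab: "valid_line a b" using Npos by (intro valid_of_mink) (simp add: Nab[symmetric])
  have below: "mink (z,1) N \<le> 0" if z: "z \<in> Z" for z
  proof -
    have "lam \<le> fdist N0 z / Ach z vj" using zs(2)[OF z] by (simp add: lam_def)
    then have "lam * Ach z vj \<le> fdist N0 z" using Apos[OF z] by (simp add: le_divide_eq)
    then show ?thesis unfolding formula[OF zd[OF z]] using q_pos[OF zd[OF z]]
      by (simp add: mult_nonneg_nonpos)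
  qed
  have zsH: "mink (zs,1) N = 0"
    unfolding formula[OF zd[OF zs(1)]] using Apos[OF zs(1)] by (simp add: lam_def)
  define H where "H = hline a b"
  have supH: "supports H Z"
    unfolding supports_def
  proof (intro exI conjI)
    show "valid_line a b" by fact
    show "Z \<subseteq> {x. x \<bullet> a \<le> b}" using below by (auto simp: Nab mink_line)
    show "H \<inter> Z \<noteq> {}" using zsH zs(1) zd[OF zs(1)] by (auto simp: H_def hline_def Nab mink_line)
  qed (simp add: H_def)
  have bnd: "s \<le> arcosh (sqrt (1 + T'^2))" if s: "s \<in> wset H Z" for s
  proof -
    obtain H' where H': "s = hsetdist H H'" "supports H' Z" using s by (auto simp: wset_def)
    obtain a' b' where ab': "valid_line a' b'" "H' = hline a' b'" "H' \<inter> Z \<noteq> {}"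
      using supports_unfold[OF H'(2)] by metis
    obtain q where q: "q \<in> H'" "q \<in> Z" using ab'(3) by auto
    have qd: "norm q < 1" using zd[OF q(2)] .
    obtain x0 where x0: "norm x0 < 1" "mink (x0,1) N = 0"
      "Ach x0 q = sqrt (1 + (mink (q,1) N)^2 / ((1 - (norm q)^2) * mink N N))"
      using foot_exists[OF qd Npos] by blast
    have x0H: "x0 \<in> H" using x0 by (simp add: H_def hline_def Nab mink_line)
    have qq: "0 < 1 - (norm q)^2" using q_pos[OF qd] .
    define d where "d = fdist N0 q - lam * Ach q vj"
    have d0: "0 \<le> d" using below[OF q(2)] q_pos[OF qd] unfolding formula[OF qd]
      by (simp add: d_def mult_le_0_iff)
    have d1: "d \<le> fdist N0 q" using lnn Apos[OF q(2)] by (simp add: d_def)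
    have "(mink (q,1) N)^2 = (1 - (norm q)^2) * d^2"
      unfolding formula[OF qd] using qq by (simp add: d_def power_mult_distrib power2_commute[of "lam * Ach q vj"])
    then have "(mink (q,1) N)^2 / ((1 - (norm q)^2) * mink N N) = d^2 / mink N N"
      using qq by simp
    also have "\<dots> \<le> d^2" using nn1 by (simp add: divide_le_eq mult_le_cancel_left1)
    also have "\<dots> \<le> T'^2"
    proof -
      have "d \<le> T'" using d1 p0(2)[OF q(2)] by (simp add: T'_def)
      then show ?thesis using d0 by (intro power_mono) auto
    qed
    finally have "Ach x0 q \<le> sqrt (1 + T'^2)" unfolding x0(3) by simp
    then have "hdist x0 q \<le> arcosh (sqrt (1 + T'^2))"
      unfolding hdist_Ach by (intro arcosh_mono_le Ach_ge1 x0(1) qd)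
    moreover have "s \<le> hdist x0 q" unfolding H'(1)
      by (rule hsetdist_le) (use x0H q ab' in \<open>auto simp: H_def intro: hline_sub[THEN subsetD]\<close>)
    ultimately show ?thesis by simp
  qed
  have "hwidth H Z \<le> arcosh (sqrt (1 + T'^2))"
    unfolding hwidth_wset using wset_props(1)[OF Z(1) supH] bnd by (intro cSup_least) auto
  also have "\<dots> < arcosh (sqrt (1 + T^2))"
  proof (rule arcosh_real_strict_mono)
    show "1 \<le> sqrt (1 + T'^2)" by simp
    have "T'^2 < T^2" using T'nn T'lt by (intro power_strict_mono) auto
    then show "sqrt (1 + T'^2) < sqrt (1 + T^2)" by simp
  qed
  finally show ?thesis using supH by blast
qed



lemma fdist_zero_iff: "norm x < 1 \<Longrightarrow> fdist N x = 0 \<longleftrightarrow> mink (x,1) N = 0"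
proof -
  assume x: "norm x < 1"
  have "0 < sqrt (1 - (norm x)^2)" using q_pos[OF x] by simp
  then show ?thesis by (simp add: fdist_def)
qed

theorem corollary1:
  fixes k :: nat and P :: "complex set"
  assumes "regular_polygon k P" and "odd k"
  shows "reduced P"
proof -
  from assms(1) obtain c r v where k3: "k \<ge> 3" and c: "c \<in> hdisk" and r: "r > 0"
    and vc: "\<forall>i<k. v i \<in> hcircle c r" and inj: "inj_on v {..<k}"
    and eq: "\<forall>i<k. hdist (v i) (v (Suc i mod k)) = hdist (v 0) (v 1)"
    and P: "P = convex hull (v ` {..<k})"
    unfolding regular_polygon_def by blast
  interpret R: regpoly k c r v
  proof
    show "odd k" by (fact assms(2))
    show "3 \<le> k" by (fact k3)
    show "norm c < 1" using c by (simp add: hdisk_def)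
    show "0 < r" by (fact r)
    show "\<And>i. i < k \<Longrightarrow> norm (v i) < 1" using vc by (auto simp: hcircle_def hdisk_def)
    show "\<And>i. i < k \<Longrightarrow> hdist c (v i) = r" using vc by (auto simp: hcircle_def)
    show "inj_on v {..<k}" by (fact inj)
    show "\<And>i. i < k \<Longrightarrow> hdist (v i) (v (Suc i mod k)) = hdist (v 0) (v 1)" using eq by auto
  qed
  define V where "V = v ` {..<k}"
  have PV: "P = convex hull V" by (simp add: P V_def)
  have fin: "finite V" by (simp add: V_def)
  have Vd: "V \<subseteq> hdisk" using R.vd by (auto simp: V_def hdisk_def)
  have vP: "\<And>i. i < k \<Longrightarrow> v i \<in> P" by (simp add: PV V_def hull_inc)
  have Pd: "P \<subseteq> hdisk" using PV Vd hull_sub_disk by simp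
  define \<Delta> where "\<Delta> = arcosh (sqrt (1 + R.T^2))"
  have Tp: "R.T > 0" by (rule R.T_pos)
  have cbP: "convex_body P"
    unfolding convex_body_def
  proof (intro conjI)
    show "P \<subseteq> hdisk" by (fact Pd)
    show "compact P" unfolding PV by (rule finite_imp_compact_convex_hull[OF fin])
    show "convex P" unfolding PV by (rule convex_convex_hull)
    show "interior P \<noteq> {}"
    proof
      assume "interior P = {}"
      then obtain a b where ab: "a \<noteq> 0" "P \<subseteq> {x. a \<bullet> x = b}"
        using empty_interior_subset_hyperplane[of P] unfolding PV using convex_convex_hull by metis
      have k0: "0 < k" using k3 by simp
      have v0: "a \<bullet> v 0 = b" using ab(2) vP[OF k0] by auto
      have "\<bar>b\<bar> < norm a"
      proof -
        have "\<bar>a \<bullet> v 0\<bar> \<le> norm a * norm (v 0)" by (rule Cauchy_Schwarz_ineq2)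
        also have "\<dots> < norm a * 1" using ab(1) R.vd[OF k0] by (intro mult_strict_left_mono) auto
        finally show ?thesis using v0 by simp
      qed
      then have vl: "valid_line a b" using ab(1) by (simp add: valid_line_def)
      have N: "mink (a,b) (a,b) > 0" by (rule mink_of_valid[OF vl])
      have z: "mink (v i, 1) (a,b) = 0" if i: "i < k" for i
      proof -
        have "a \<bullet> v i = b" using ab(2) vP[OF i] by blast
        then show ?thesis by (simp add: mink_line inner_commute)
      qed
      obtain w where w: "w < k" "R.T * sqrt (mink (a,b) (a,b)) \<le> fdist (a,b) (v w)"
        using R.thick_lower[OF N, of 0] z k0 by auto
      have "fdist (a,b) (v w) = 0" using z[OF w(1)] by (simp add: fdist_def)
      moreover have "0 < R.T * sqrt (mink (a,b) (a,b))" using Tp N by simp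
      ultimately show False using w(2) by simp
    qed
  qed
  have lowP: "\<Delta> \<le> thickness P"
    unfolding thickness_def
  proof (rule cInf_greatest)
    have k0: "0 < k" using k3 by simp
    obtain N0 where N0: "mink N0 N0 = 1" "\<forall>i<k. 0 \<le> fdist N0 (v i)" "\<exists>i<k. fdist N0 (v i) = 0"
      using R.side_line[OF k0] by blast
    have sup0: "supports (hline (fst N0) (snd N0)) P"
      unfolding supports_def
    proof (intro exI conjI)
      show "valid_line (fst N0) (snd N0)" using N0(1) by (intro valid_of_mink) simp
      have "\<forall>x\<in>V. 0 \<le> fdist N0 x" using N0(2) by (auto simp: V_def)
      then have nn: "\<forall>x\<in>P. 0 \<le> fdist N0 x" by (rule nonneg_on_hull[OF PV Vd])
      show "P \<subseteq> {x. x \<bullet> fst N0 \<le> snd N0}"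
      proof
        fix x assume x: "x \<in> P"
        have xd: "norm x < 1" using x Pd by (auto simp: hdisk_def)
        have "mink (x,1) N0 \<le> 0" using nn x fdist_nonneg_iff[OF xd, of N0] by simp
        then show "x \<in> {x. x \<bullet> fst N0 \<le> snd N0}" by (simp add: mink_def)
      qed
      obtain i where i: "i < k" "fdist N0 (v i) = 0" using N0(3) by blast
      have "mink (v i, 1) N0 = 0" using i fdist_zero_iff[OF R.vd[OF i(1)]] by simp
      then show "hline (fst N0) (snd N0) \<inter> P \<noteq> {}"
        using vP[OF i(1)] R.vd[OF i(1)] by (auto simp: hline_def mink_def)
    qed simp
    then show "{hwidth H P |H. supports H P} \<noteq> {}" by blast
  next
    fix y assume "y \<in> {hwidth H P |H. supports H P}"
    then obtain H where H: "y = hwidth H P" "supports H P" by blast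
    have "\<Delta> \<le> hwidth H P" unfolding \<Delta>_def
    proof (rule width_lower_gen[OF PV fin Vd cbP H(2) Tp])
      fix a b assume vl: "valid_line a b" and Hab: "H = hline a b" and side: "\<forall>x\<in>P. mink (x,1) (a,b) \<le> 0"
      have N: "mink (a,b) (a,b) > 0" by (rule mink_of_valid[OF vl])
      obtain p where p: "p \<in> H" "p \<in> P" using H(2) unfolding supports_def by blast
      have pa: "p \<bullet> a = b" using p(1) Hab by (simp add: hline_def)
      have "\<exists>i0<k. mink (v i0, 1) (a,b) = 0"
      proof (rule ccontr)
        assume "\<not> (\<exists>i0<k. mink (v i0, 1) (a,b) = 0)"
        then have "\<And>x. x \<in> V \<Longrightarrow> x \<bullet> a < b"
          using side vP by (force simp: V_def mink_line)
        then have "P \<subseteq> {x. x \<bullet> a < b}" unfolding PV by (rule halfspace_hull_lt)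
        then show False using p(2) pa by auto
      qed
      then obtain i0 where i0: "i0 < k" "mink (v i0, 1) (a,b) = 0" by blast
      obtain w where w: "w < k" "R.T * sqrt (mink (a,b) (a,b)) \<le> fdist (a,b) (v w)"
        using R.thick_lower[OF N _ i0] side vP by blast
      then show "\<exists>w\<in>V. R.T * sqrt (mink (a,b) (a,b)) \<le> fdist (a,b) w" by (auto simp: V_def)
    qed
    then show "\<Delta> \<le> y" using H(1) by simp
  qed
  have "thickness Z < thickness P" if Z: "convex_body Z" "Z \<subset> P" for Z
  proof -
    have ZP: "Z \<subseteq> P" using Z(2) by auto
    obtain j where j: "j < k" "v j \<notin> Z"
    proof (rule ccontr)
      assume "\<not> thesis"
      then have "V \<subseteq> Z" using that by (auto simp: V_def)
      then have "P \<subseteq> Z" unfolding PV using Z(1) by (intro hull_minimal) (auto simp: convex_body_def)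
      then show False using Z(2) by auto
    qed
    obtain N0 where N0: "mink N0 N0 = 1" "\<forall>i<k. 0 \<le> fdist N0 (v i)" "\<exists>i<k. fdist N0 (v i) = 0"
      "fdist N0 (v j) = R.T" "\<forall>i<k. v i \<noteq> v j \<longrightarrow> fdist N0 (v i) < R.T"
      using R.side_line[OF j(1)] by blast
    have vjV: "v j \<in> V" using j by (simp add: V_def)
    obtain H where H: "supports H Z" "hwidth H Z < \<Delta>"
      using thick_upper_gen[OF PV fin Vd Z(1) ZP vjV j(2) N0(1) _ N0(4) _ Tp] N0(2) N0(5)
      unfolding \<Delta>_def by (auto simp: V_def)
    have "thickness Z \<le> hwidth H Z"
      unfolding thickness_def
    proof (rule cInf_lower)
      show "hwidth H Z \<in> {hwidth H Z |H. supports H Z}" using H(1) by blast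
      show "bdd_below {hwidth H Z |H. supports H Z}"
        by (rule bdd_belowI[of _ 0]) (auto intro: hwidth_nonneg[OF Z(1)])
    qed
    then show ?thesis using H(2) lowP by simp
  qed
  then show ?thesis unfolding reduced_def using cbP by blast
qed


end
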